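(* Let $n\ge 1$, $G=\langle a_1,b_1,\ldots,a_n,b_n \mid p_1p_2\cdots p_n\rangle$ with $p_i=a_ib_ia_i^{-1}b_i^{-1}$, $p=p_1\cdots p_n$, and let $P$ be the free resolution $0\to P_2\xrightarrow{d_2}P_1\xrightarrow{d_1}P_0\xrightarrow{\varepsilon}\mathbb{Z}\to0$ of $\mathbb{Z}$ over $\mathbb{Z}G$ with $P_0=\mathbb{Z}G\,x$, $P_1$ free on $y_1,\ldots,y_n,z_1,\ldots,z_n$, $P_2=\mathbb{Z}G\,w$, $\varepsilon(x)=1$, $d_1(y_i)=(a_i-1)x$, $d_1(z_i)=(b_i-1)x$, $d_2(w)=\sum_{i=1}^n\bigl(\frac{\partial p}{\partial a_i}y_i+\frac{\partial p}{\partial b_i}z_i\bigr)$. Then there is a diagonal approximation $\Delta\colon P\to P\otimes P$ such that \begin{align*} &\Delta_0(x)=x\otimes x,\qquad \Delta_1(y_i)=y_i\otimes a_ix+x\otimes y_i,\qquad \Delta_1(z_i)=z_i\otimes b_ix+x\otimes z_i,\\ &\Delta_{02}(w)=x\otimes w, \end{align*} and \begin{align*} \Delta_{11}(w)={}&\sum_{i=1}^n\Bigl[\sum_{j=1}^{i-1}(p_1\cdots p_{j-1})(1-a_jb_ja_j^{-1})y_j\otimes(p_1\cdots p_{i-1})y_i\\ &\qquad+\sum_{j=1}^{i-1}(p_1\cdots p_{j-1})a_j(1-b_ja_j^{-1}b_j^{-1})z_j\otimes(p_1\cdots p_{i-1})y_i\Bigr]\\ &-\sum_{i=1}^{n-1}\Bigl[\sum_{j=1}^{i-1}\Bigl((p_1\cdots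 p_{j-1})(1-a_jb_ja_j^{-1})y_j\otimes(p_1\cdots p_{i-1})a_ib_ia_i^{-1}y_i\\ &\qquad\qquad+(p_1\cdots p_{j-1})a_j(1-b_ja_j^{-1}b_j^{-1})z_j\otimes(p_1\cdots p_{i-1})a_ib_ia_i^{-1}y_i\Bigr)\\ &\qquad+(p_1\cdots p_{i-1})(1-a_ib_ia_i^{-1})y_i\otimes(p_1\cdots p_{i-1})a_ib_ia_i^{-1}y_i\\ &\qquad+(p_1\cdots p_{i-1})a_iz_i\otimes(p_1\cdots p_{i-1})a_ib_ia_i^{-1}y_i\Bigr]\\ &+\sum_{i=1}^{n}\Bigl[\sum_{j=1}^{i-1}\Bigl((p_1\cdots p_{j-1})(1-a_jb_ja_j^{-1})y_j\otimes(p_1\cdots p_{i-1})a_iz_i\\ &\qquad\qquad+(p_1\cdots p_{j-1})a_j(1-b_ja_j^{-1}b_j^{-1})z_j\otimes(p_1\cdots p_{i-1})a_iz_i\Bigr)\\ &\qquad+(p_1\cdots p_{i-1})y_i\otimes(p_1\cdots p_{i-1})a_iz_i\Bigr]\\ &-\sum_{i=1}^{n-1}\Bigl[\sum_{j=1}^{i}\Bigl((p_1\cdots p_{j-1})(1-a_jb_ja_j^{-1})y_j\otimes(p_1\cdots p_i)z_i\\ &\qquad\qquad+(p_1\cdots p_{j-1})a_j(1-b_ja_j^{-1}b_j^{-1})z_j\otimes(p_1\cdots p_i)z_i\Bigr)\Bigr]\\ &-z_n\otimes b_ny_n. \end{align*}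
   Context: Fox derivatives: for a free group on generators $g_1,\dots,g_m$, $\partial/\partial g_i$ is the additive map with $\partial g_j/\partial g_i=\delta_{ij}$ and $\partial(uv)/\partial g_i=\partial u/\partial g_i+u\,\partial v/\partial g_i$, followed by passage to $\mathbb{Z}G$. The complex $P\otimes P$ has $(P\otimes P)_m=\bigoplus_{r+s=m}P_r\otimes_{\mathbb{Z}}P_s$, with $G$ acting diagonally, $g(u\otimes v)=gu\otimes gv$, differential $\partial(u\otimes v)=du\otimes v+(-1)^r u\otimes dv$ for $u\in P_r$, and augmentation $\varepsilon\otimes\varepsilon\colon P_0\otimes P_0\to\mathbb{Z}\otimes\mathbb{Z}\cong\mathbb{Z}$; it is again a free resolution of $\mathbb{Z}$ over $\mathbb{Z}G$. A diagonal approximation is a $\mathbb{Z}G$-chain map $\Delta\colon P\to P\otimes P$ with $(\varepsilon\otimes\varepsilon)\Delta_0=\varepsilon$. For $r+s=m$, $\Delta_{rs}\colon P_m\to P_r\otimes P_s$ denotes $\Delta_m$ followed by the projection onto the summand $P_r\otimes P_s$. Empty products $p_1\cdots p_0$ equal $1$, and empty sums are $0$. *)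

theory Defs
  imports Main "HOL-Library.Function_Algebras"
begin

text \<open>A letter (i, b, e): generator a_i (b = False) or b_i (b = True), inverted iff e.\<close>
type_synonym letter = "nat \<times> bool \<times> bool"
type_synonym word = "letter list"

definition letters :: "nat \<Rightarrow> letter set" where
  "letters n = {(i, b, e). 1 \<le> i \<and> i \<le> n}"

definition words :: "nat \<Rightarrow> word set" where
  "words n = lists (letters n)"

fun inv_letter :: "letter \<Rightarrow> letter" where
  "inv_letter (i, b, e) = (i, b, \<not> e)"

definition la :: "nat \<Rightarrow> letter" where "la i = (i, False, False)"
definition lb :: "nat \<Rightarrow> letter" where "lb i = (i, True, False)"
definition lai :: "nat \<Rightarrow> letter" where "lai i = (i, False, True)"
definition lbi :: "nat \<Rightarrow> letter" where "lbi i = (i, True, True)"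

definition comm :: "nat \<Rightarrow> word" where
  "comm i = [la i, lb i, lai i, lbi i]"

definition pw :: "nat \<Rightarrow> word" where
  "pw k = concat (map comm [1..<k+1])"

inductive step :: "nat \<Rightarrow> word \<Rightarrow> word \<Rightarrow> bool" for n where
  free: "\<lbrakk>u \<in> words n; v \<in> words n; l \<in> letters n\<rbrakk>
          \<Longrightarrow> step n (u @ [l, inv_letter l] @ v) (u @ v)"
| rel: "\<lbrakk>u \<in> words n; v \<in> words n\<rbrakk> \<Longrightarrow> step n (u @ pw n @ v) (u @ v)"

definition wequiv :: "nat \<Rightarrow> word \<Rightarrow> word \<Rightarrow> bool" where
  "wequiv n u v \<longleftrightarrow> u \<in> words n \<and> (\<lambda>x y. step n x y \<or> step n y x)\<^sup>*\<^sup>* u v"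

definition cls :: "nat \<Rightarrow> word \<Rightarrow> word set" where
  "cls n w = {v. wequiv n w v}"

definition Gcar :: "nat \<Rightarrow> word set set" where
  "Gcar n = cls n ` words n"

definition gmul :: "nat \<Rightarrow> word set \<Rightarrow> word set \<Rightarrow> word set" where
  "gmul n g h = cls n ((SOME u. u \<in> g) @ (SOME v. v \<in> h))"

datatype gen = X | Y nat | Z nat | W

fun deg :: "gen \<Rightarrow> nat" where
  "deg X = 0" | "deg (Y i) = 1" | "deg (Z i) = 1" | "deg W = 2"

fun valid_gen :: "nat \<Rightarrow> gen \<Rightarrow> bool" where
  "valid_gen n X = True"
| "valid_gen n (Y i) = (1 \<le> i \<and> i \<le> n)"
| "valid_gen n (Z i) = (1 \<le> i \<and> i \<le> n)"
| "valid_gen n W = True"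

text \<open>A cell (g, e) is the Z-basis element g e of P_r (g in G, e a free ZG-generator).\<close>
type_synonym cell = "word set \<times> gen"

definition cells :: "nat \<Rightarrow> nat \<Rightarrow> cell set" where
  "cells n r = {(g, e). g \<in> Gcar n \<and> valid_gen n e \<and> deg e = r}"

definition supp :: "('a \<Rightarrow> 'b::zero) \<Rightarrow> 'a set" where
  "supp f = {c. f c \<noteq> 0}"

definition Pmod :: "nat \<Rightarrow> nat \<Rightarrow> (cell \<Rightarrow> int) set" where
  "Pmod n r = {f. finite (supp f) \<and> supp f \<subseteq> cells n r}"

text \<open>(P \<otimes> P)_m = direct sum of P_r \<otimes>_Z P_s (r + s = m), realised as the free abelian
  group on pairs of cells.\<close>
definition PPmod :: "nat \<Rightarrow> nat \<Rightarrow> (cell \<times> cell \<Rightarrow> int) set" where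
  "PPmod n m = {F. finite (supp F) \<and>
     supp F \<subseteq> {(c, c'). \<exists>r s. c \<in> cells n r \<and> c' \<in> cells n s \<and> r + s = m}}"

definition bv :: "'a \<Rightarrow> 'a \<Rightarrow> int" where
  "bv c = (\<lambda>d. if d = c then 1 else 0)"

definition tens :: "('a \<Rightarrow> int) \<Rightarrow> ('b \<Rightarrow> int) \<Rightarrow> ('a \<times> 'b \<Rightarrow> int)" where
  "tens f f' = (\<lambda>(c, c'). f c * f' c')"

definition lext :: "('a \<Rightarrow> int) \<Rightarrow> ('a \<Rightarrow> 'b \<Rightarrow> int) \<Rightarrow> ('b \<Rightarrow> int)" where
  "lext f \<phi> = (\<lambda>d. \<Sum>c\<in>supp f. f c * \<phi> c d)"

definition act :: "nat \<Rightarrow> word set \<Rightarrow> (cell \<Rightarrow> int) \<Rightarrow> (cell \<Rightarrow> int)" where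
  "act n g f = lext f (\<lambda>(h, e). bv (gmul n g h, e))"

definition act2 :: "nat \<Rightarrow> word set \<Rightarrow> (cell \<times> cell \<Rightarrow> int) \<Rightarrow> (cell \<times> cell \<Rightarrow> int)" where
  "act2 n g F = lext F (\<lambda>((h, e), (h', e')). tens (bv (gmul n g h, e)) (bv (gmul n g h', e')))"

text \<open>Fox derivatives, as formal integer combinations of words.\<close>
fun fox_letter :: "nat \<times> bool \<Rightarrow> letter \<Rightarrow> (word \<times> int) list" where
  "fox_letter g (i, b, e) =
     (if (i, b) = g then (if e then [([(i, b, True)], -1)] else [([], 1)]) else [])"

fun fox :: "nat \<times> bool \<Rightarrow> word \<Rightarrow> (word \<times> int) list" where
  "fox g [] = []"
| "fox g (l # v) = fox_letter g l @ map (\<lambda>(u, k). (l # u, k)) (fox g v)"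

definition fcomb :: "nat \<Rightarrow> word set \<Rightarrow> (word \<times> int) list \<Rightarrow> gen \<Rightarrow> (cell \<Rightarrow> int)" where
  "fcomb n g ts e = (\<lambda>c. \<Sum>(u, k)\<leftarrow>ts. if c = (gmul n g (cls n u), e) then k else 0)"

text \<open>The differential of P on basis elements g e (d_1 in degree 1, d_2 in degree 2).
  Generator a_i is (i, False), b_i is (i, True).\<close>
fun dP :: "nat \<Rightarrow> cell \<Rightarrow> (cell \<Rightarrow> int)" where
  "dP n (g, X) = 0"
| "dP n (g, Y i) = bv (gmul n g (cls n [la i]), X) - bv (g, X)"
| "dP n (g, Z i) = bv (gmul n g (cls n [lb i]), X) - bv (g, X)"
| "dP n (g, W) = (\<Sum>i\<in>{1..n}. fcomb n g (fox (i, False) (pw n)) (Y i)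
                               + fcomb n g (fox (i, True) (pw n)) (Z i))"

definition dmap :: "nat \<Rightarrow> (cell \<Rightarrow> int) \<Rightarrow> (cell \<Rightarrow> int)" where
  "dmap n f = lext f (dP n)"

definition dPP :: "nat \<Rightarrow> (cell \<times> cell \<Rightarrow> int) \<Rightarrow> (cell \<times> cell \<Rightarrow> int)" where
  "dPP n F = lext F (\<lambda>(c, c'). tens (dP n c) (bv c')
                       + (\<lambda>t. (-1) ^ deg (snd c) * tens (bv c) (dP n c') t))"

definition eps :: "(cell \<Rightarrow> int) \<Rightarrow> int" where
  "eps f = (\<Sum>c\<in>supp f. if snd c = X then f c else 0)"

definition eps2 :: "(cell \<times> cell \<Rightarrow> int) \<Rightarrow> int" where
  "eps2 F = (\<Sum>cc\<in>supp F. if snd (fst cc) = X \<and> snd (snd cc) = X then F cc else 0)"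

definition proj :: "nat \<Rightarrow> nat \<Rightarrow> (cell \<times> cell \<Rightarrow> int) \<Rightarrow> (cell \<times> cell \<Rightarrow> int)" where
  "proj r s F = (\<lambda>(c, c'). if deg (snd c) = r \<and> deg (snd c') = s then F (c, c') else 0)"

definition ZG_linear :: "nat \<Rightarrow> nat \<Rightarrow> ((cell \<Rightarrow> int) \<Rightarrow> (cell \<times> cell \<Rightarrow> int)) \<Rightarrow> bool" where
  "ZG_linear n r D \<longleftrightarrow>
     (\<forall>f\<in>Pmod n r. D f \<in> PPmod n r) \<and>
     (\<forall>f\<in>Pmod n r. \<forall>f'\<in>Pmod n r. D (f + f') = D f + D f') \<and>
     (\<forall>g\<in>Gcar n. \<forall>f\<in>Pmod n r. D (act n g f) = act2 n g (D f))"

text \<open>A diagonal approximation P \<rightarrow> P \<otimes> P (P is concentrated in degrees 0,1,2, so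
  \<Delta>_m = 0 for m > 2 and the chain-map conditions above degree 2 are trivial).\<close>
definition diag_approx :: "nat \<Rightarrow> ((cell \<Rightarrow> int) \<Rightarrow> (cell \<times> cell \<Rightarrow> int))
    \<Rightarrow> ((cell \<Rightarrow> int) \<Rightarrow> (cell \<times> cell \<Rightarrow> int)) \<Rightarrow> ((cell \<Rightarrow> int) \<Rightarrow> (cell \<times> cell \<Rightarrow> int)) \<Rightarrow> bool" where
  "diag_approx n D0 D1 D2 \<longleftrightarrow>
     ZG_linear n 0 D0 \<and> ZG_linear n 1 D1 \<and> ZG_linear n 2 D2 \<and>
     (\<forall>f\<in>Pmod n 1. dPP n (D1 f) = D0 (dmap n f)) \<and>
     (\<forall>f\<in>Pmod n 2. dPP n (D2 f) = D1 (dmap n f)) \<and>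
     (\<forall>f\<in>Pmod n 0. eps2 (D0 f) = eps f)"

definition ev :: "nat \<Rightarrow> word \<Rightarrow> gen \<Rightarrow> (cell \<Rightarrow> int)" where
  "ev n u e = bv (cls n u, e)"

definition Aterm :: "nat \<Rightarrow> nat \<Rightarrow> (cell \<Rightarrow> int)" where
  "Aterm n j = ev n (pw (j - 1)) (Y j) - ev n (pw (j - 1) @ [la j, lb j, lai j]) (Y j)"

definition Bterm :: "nat \<Rightarrow> nat \<Rightarrow> (cell \<Rightarrow> int)" where
  "Bterm n j = ev n (pw (j - 1) @ [la j]) (Z j) - ev n (pw (j - 1) @ [la j, lb j, lai j, lbi j]) (Z j)"

definition Delta11 :: "nat \<Rightarrow> (cell \<times> cell \<Rightarrow> int)" where
  "Delta11 n =
     (\<Sum>i=1..n. \<Sum>j\<in>{1..<i}.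
        tens (Aterm n j) (ev n (pw (i - 1)) (Y i))
      + tens (Bterm n j) (ev n (pw (i - 1)) (Y i)))
   - (\<Sum>i\<in>{1..<n}.
        (\<Sum>j\<in>{1..<i}.
           tens (Aterm n j) (ev n (pw (i - 1) @ [la i, lb i, lai i]) (Y i))
         + tens (Bterm n j) (ev n (pw (i - 1) @ [la i, lb i, lai i]) (Y i)))
      + tens (Aterm n i) (ev n (pw (i - 1) @ [la i, lb i, lai i]) (Y i))
      + tens (ev n (pw (i - 1) @ [la i]) (Z i)) (ev n (pw (i - 1) @ [la i, lb i, lai i]) (Y i)))
   + (\<Sum>i=1..n.
        (\<Sum>j\<in>{1..<i}.
           tens (Aterm n j) (ev n (pw (i - 1) @ [la i]) (Z i))
         + tens (Bterm n j) (ev n (pw (i - 1) @ [la i]) (Z i)))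
      + tens (ev n (pw (i - 1)) (Y i)) (ev n (pw (i - 1) @ [la i]) (Z i)))
   - (\<Sum>i\<in>{1..<n}. \<Sum>j=1..i.
        tens (Aterm n j) (ev n (pw i) (Z i))
      + tens (Bterm n j) (ev n (pw i) (Z i)))
   - tens (ev n [] (Z n)) (ev n [lb n] (Y n))"

end

theory Submission
  imports Defs
begin


lemma letters_iff[simp]: "l \<in> letters n \<longleftrightarrow> 1 \<le> fst l \<and> fst l \<le> n"
  by (cases l) (auto simp: letters_def)

lemma words_append[simp]: "u @ v \<in> words n \<longleftrightarrow> u \<in> words n \<and> v \<in> words n"
  by (auto simp: words_def)
lemma words_Cons[simp]: "l # v \<in> words n \<longleftrightarrow> l \<in> letters n \<and> v \<in> words n"
  by (auto simp: words_def)
lemma words_Nil[simp]: "[] \<in> words n"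
  by (auto simp: words_def)

lemma letter_simps[simp]:
  "fst (la i) = i" "fst (lb i) = i" "fst (lai i) = i" "fst (lbi i) = i"
  by (auto simp: la_def lb_def lai_def lbi_def)

lemma inv_letter_simps[simp]:
  "inv_letter (la i) = lai i" "inv_letter (lai i) = la i"
  "inv_letter (lb i) = lbi i" "inv_letter (lbi i) = lb i"
  by (auto simp: la_def lb_def lai_def lbi_def)

lemma comm_words[simp]: "comm i \<in> words n \<longleftrightarrow> 1 \<le> i \<and> i \<le> n"
  by (auto simp: comm_def)

lemma pw_Suc: "pw (Suc k) = pw k @ comm (Suc k)"
  by (simp add: pw_def)
lemma pw_0[simp]: "pw 0 = []"
  by (simp add: pw_def)

lemma pw_words[simp]: "k \<le> n \<Longrightarrow> pw k \<in> words n"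
  by (induction k) (auto simp: pw_Suc)

lemma pw_minus: "1 \<le> i \<Longrightarrow> pw i = pw (i - 1) @ [la i, lb i, lai i, lbi i]"
  using pw_Suc[of "i - 1"] by (simp add: comm_def)

lemma step_words: "step n x y \<Longrightarrow> x \<in> words n \<and> y \<in> words n"
  by (induction rule: step.induct) (auto simp: pw_words)

definition sr where "sr n = (\<lambda>x y. step n x y \<or> step n y x)"

lemma sr_words: "(sr n)\<^sup>*\<^sup>* x y \<Longrightarrow> x \<in> words n \<Longrightarrow> y \<in> words n"
  by (induction rule: rtranclp_induct) (auto simp: sr_def dest: step_words)

lemma sr_sym: "(sr n)\<^sup>*\<^sup>* x y \<Longrightarrow> (sr n)\<^sup>*\<^sup>* y x"
proof (induction rule: rtranclp_induct)
  case base then show ?case by simp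
next
  case (step y z)
  have "sr n z y" using step(2) by (auto simp: sr_def)
  then show ?case using step(3) by (meson converse_rtranclp_into_rtranclp)
qed

lemma wequiv_alt: "wequiv n u v \<longleftrightarrow> u \<in> words n \<and> (sr n)\<^sup>*\<^sup>* u v"
  by (simp add: wequiv_def sr_def)

lemma wequiv_refl: "u \<in> words n \<Longrightarrow> wequiv n u u"
  by (simp add: wequiv_alt)

lemma wequiv_sym: "wequiv n u v \<Longrightarrow> wequiv n v u"
  by (auto simp: wequiv_alt intro: sr_sym sr_words)

lemma wequiv_trans: "wequiv n u v \<Longrightarrow> wequiv n v w \<Longrightarrow> wequiv n u w"
  by (auto simp: wequiv_alt)

lemma wequiv_words: "wequiv n u v \<Longrightarrow> u \<in> words n \<and> v \<in> words n"
  by (auto simp: wequiv_alt intro: sr_words)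

lemma step_cong: "step n x y \<Longrightarrow> w \<in> words n \<Longrightarrow> w' \<in> words n \<Longrightarrow> step n (w @ x @ w') (w @ y @ w')"
proof (induction rule: step.induct)
  case (free u v l)
  then show ?case using step.free[of "w @ u" n "v @ w'" l] by simp
next
  case (rel u v)
  then show ?case using step.rel[of "w @ u" n "v @ w'"] by simp
qed

lemma sr_cong: "(sr n)\<^sup>*\<^sup>* x y \<Longrightarrow> w \<in> words n \<Longrightarrow> w' \<in> words n \<Longrightarrow> (sr n)\<^sup>*\<^sup>* (w @ x @ w') (w @ y @ w')"
proof (induction rule: rtranclp_induct)
  case base then show ?case by simp
next
  case (step y z)
  then have "sr n (w @ y @ w') (w @ z @ w')" by (auto simp: sr_def intro: step_cong)
  then show ?case using step by (meson rtranclp.rtrancl_into_rtrancl)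
qed

lemma wequiv_cong: "wequiv n x y \<Longrightarrow> w \<in> words n \<Longrightarrow> w' \<in> words n \<Longrightarrow> wequiv n (w @ x @ w') (w @ y @ w')"
  by (auto simp: wequiv_alt intro: sr_cong)

lemma cls_eq: "wequiv n u v \<Longrightarrow> cls n u = cls n v"
  unfolding cls_def by (auto intro: wequiv_trans wequiv_sym)

lemma cls_mem: "u \<in> words n \<Longrightarrow> u \<in> cls n u"
  by (simp add: cls_def wequiv_refl)

lemma cls_memD: "u' \<in> cls n u \<Longrightarrow> wequiv n u u'"
  by (simp add: cls_def)

lemma gmul_cls: "u \<in> words n \<Longrightarrow> v \<in> words n \<Longrightarrow> gmul n (cls n u) (cls n v) = cls n (u @ v)"
proof -
  assume u: "u \<in> words n" and v: "v \<in> words n"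
  define u' where "u' = (SOME x. x \<in> cls n u)"
  define v' where "v' = (SOME x. x \<in> cls n v)"
  have hu: "wequiv n u u'" unfolding u'_def by (rule cls_memD, rule someI, rule cls_mem[OF u])
  have hv: "wequiv n v v'" unfolding v'_def by (rule cls_memD, rule someI, rule cls_mem[OF v])
  have "wequiv n (u @ v) (u' @ v)" using wequiv_cong[OF hu, of "[]" v] v by simp
  moreover have "wequiv n (u' @ v) (u' @ v')" using wequiv_cong[OF hv, of u' "[]"] wequiv_words[OF hu] by simp
  ultimately have "wequiv n (u @ v) (u' @ v')" by (rule wequiv_trans)
  then show ?thesis unfolding gmul_def u'_def[symmetric] v'_def[symmetric] by (simp add: cls_eq)
qed

lemma Gcar_cls[simp]: "u \<in> words n \<Longrightarrow> cls n u \<in> Gcar n"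
  by (simp add: Gcar_def)

lemma GcarE: "g \<in> Gcar n \<Longrightarrow> (\<And>u. u \<in> words n \<Longrightarrow> g = cls n u \<Longrightarrow> P) \<Longrightarrow> P"
  by (auto simp: Gcar_def)

lemma gmul_Gcar: "g \<in> Gcar n \<Longrightarrow> h \<in> Gcar n \<Longrightarrow> gmul n g h \<in> Gcar n"
  by (auto elim!: GcarE simp: gmul_cls)

lemma gmul_assoc: "g \<in> Gcar n \<Longrightarrow> h \<in> Gcar n \<Longrightarrow> k \<in> Gcar n \<Longrightarrow>
   gmul n g (gmul n h k) = gmul n (gmul n g h) k"
  by (auto elim!: GcarE simp: gmul_cls)

lemma gmul_one: "g \<in> Gcar n \<Longrightarrow> gmul n (cls n []) g = g"
  by (auto elim!: GcarE simp: gmul_cls)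

lemma cls_free: "u \<in> words n \<Longrightarrow> w \<in> words n \<Longrightarrow> l \<in> letters n \<Longrightarrow>
   cls n (u @ l # inv_letter l # w) = cls n (u @ w)"
proof -
  assume a: "u \<in> words n" "w \<in> words n" "l \<in> letters n"
  have "step n (u @ [l, inv_letter l] @ w) (u @ w)" using a by (rule step.free)
  then have "wequiv n (u @ [l, inv_letter l] @ w) (u @ w)"
    using a by (cases l) (auto simp: wequiv_def)
  then show ?thesis by (simp add: cls_eq)
qed

lemma cls_rel: "u \<in> words n \<Longrightarrow> w \<in> words n \<Longrightarrow> cls n (u @ pw n @ w) = cls n (u @ w)"
proof -
  assume a: "u \<in> words n" "w \<in> words n"
  have "step n (u @ pw n @ w) (u @ w)" using a by (rule step.rel)
  then have "wequiv n (u @ pw n @ w) (u @ w)"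
    using a by (auto simp: wequiv_def)
  then show ?thesis by (simp add: cls_eq)
qed


lemma fsum_apply: "(sum F I) x = (\<Sum>i\<in>I. F i x)"
  by (induction I rule: infinite_finite_induct) auto

lemma supp_zero[simp]: "supp (0 :: 'a \<Rightarrow> int) = {}"
  by (simp add: supp_def)
lemma supp_add: "supp ((f :: 'a \<Rightarrow> int) + g) \<subseteq> supp f \<union> supp g"
  by (auto simp: supp_def)
lemma supp_diff: "supp ((f :: 'a \<Rightarrow> int) - g) \<subseteq> supp f \<union> supp g"
  by (auto simp: supp_def)
lemma supp_uminus[simp]: "supp (- (f :: 'a \<Rightarrow> int)) = supp f"
  by (auto simp: supp_def)
lemma supp_sum: "supp (\<Sum>i\<in>I. (F i :: 'a \<Rightarrow> int)) \<subseteq> (\<Union>i\<in>I. supp (F i))"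
proof (induction I rule: infinite_finite_induct)
  case (insert x I)
  have "supp (\<Sum>i\<in>insert x I. F i) = supp (F x + (\<Sum>i\<in>I. F i))" using insert(1,2) by simp
  also have "\<dots> \<subseteq> supp (F x) \<union> supp (\<Sum>i\<in>I. F i)" by (rule supp_add)
  finally show ?case using insert(3) by blast
qed (auto simp: supp_def)
lemma supp_bv[simp]: "supp (bv c) = {c}"
  by (auto simp: supp_def bv_def)
lemma supp_tens: "supp (tens f g) \<subseteq> supp f \<times> supp g"
  by (auto simp: supp_def tens_def)

lemma fin_add[simp,intro]: "finite (supp f) \<Longrightarrow> finite (supp g) \<Longrightarrow> finite (supp ((f :: 'a \<Rightarrow> int) + g))"
  using supp_add finite_subset by (metis finite_Un)
lemma fin_diff[simp,intro]: "finite (supp f) \<Longrightarrow> finite (supp g) \<Longrightarrow> finite (supp ((f :: 'a \<Rightarrow> int) - g))"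
  using supp_diff finite_subset by (metis finite_Un)
lemma fin_sum[simp,intro]: "(\<And>i. i \<in> I \<Longrightarrow> finite (supp (F i))) \<Longrightarrow> finite (supp (\<Sum>i\<in>I. (F i :: 'a \<Rightarrow> int)))"
proof (cases "finite I")
  case True
  assume "\<And>i. i \<in> I \<Longrightarrow> finite (supp (F i))"
  then show ?thesis using True supp_sum[of F I] by (meson finite_UN_I finite_subset)
qed simp
lemma fin_tens[simp,intro]: "finite (supp f) \<Longrightarrow> finite (supp g) \<Longrightarrow> finite (supp (tens f g))"
  using supp_tens by (metis finite_SigmaI finite_subset)

lemma tens_add_left: "tens (f + f') g = tens f g + tens f' g"
  by (auto simp: tens_def fun_eq_iff algebra_simps)
lemma tens_add_right: "tens f (g + g') = tens f g + tens f g'"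
  by (auto simp: tens_def fun_eq_iff algebra_simps)
lemma tens_diff_left: "tens (f - f') g = tens f g - tens f' g"
  by (auto simp: tens_def fun_eq_iff algebra_simps)
lemma tens_diff_right: "tens f (g - g') = tens f g - tens f g'"
  by (auto simp: tens_def fun_eq_iff algebra_simps)
lemma tens_uminus_left: "tens (- f) g = - tens f g"
  by (auto simp: tens_def fun_eq_iff algebra_simps)
lemma tens_uminus_right: "tens f (- g) = - tens f g"
  by (auto simp: tens_def fun_eq_iff algebra_simps)
lemma tens_zero_left[simp]: "tens 0 g = 0"
  by (auto simp: tens_def fun_eq_iff)
lemma tens_zero_right[simp]: "tens f 0 = 0"
  by (auto simp: tens_def fun_eq_iff)
lemma tens_sum_left: "tens (\<Sum>i\<in>I. F i) g = (\<Sum>i\<in>I. tens (F i) g)"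
  by (auto simp: fun_eq_iff tens_def fsum_apply sum_distrib_right)
lemma tens_sum_right: "tens f (\<Sum>i\<in>I. G i) = (\<Sum>i\<in>I. tens f (G i))"
  by (auto simp: fun_eq_iff tens_def fsum_apply sum_distrib_left)
lemmas tens_lin = tens_add_left tens_add_right tens_diff_left tens_diff_right
  tens_uminus_left tens_uminus_right tens_sum_left tens_sum_right

lemma tens_bv: "tens (bv c) (bv c') = bv (c, c')"
  by (auto simp: tens_def bv_def fun_eq_iff)

lemma lext_superset: "finite S \<Longrightarrow> supp f \<subseteq> S \<Longrightarrow> lext f \<phi> = (\<lambda>d. \<Sum>c\<in>S. f c * \<phi> c d)"
  unfolding lext_def
  by (rule ext, rule sum.mono_neutral_left) (auto simp: supp_def)

lemma lext_add: "finite (supp f) \<Longrightarrow> finite (supp g) \<Longrightarrow> lext (f + g) \<phi> = lext f \<phi> + lext g \<phi>"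
proof -
  assume a: "finite (supp f)" "finite (supp g)"
  let ?S = "supp f \<union> supp g"
  have "lext (f + g) \<phi> = (\<lambda>d. \<Sum>c\<in>?S. (f + g) c * \<phi> c d)"
    by (rule lext_superset) (use a supp_add[of f g] in auto)
  moreover have "lext f \<phi> = (\<lambda>d. \<Sum>c\<in>?S. f c * \<phi> c d)" by (rule lext_superset) (use a in auto)
  moreover have "lext g \<phi> = (\<lambda>d. \<Sum>c\<in>?S. g c * \<phi> c d)" by (rule lext_superset) (use a in auto)
  ultimately show ?thesis by (auto simp: fun_eq_iff algebra_simps sum.distrib)
qed

lemma lext_scale: "finite (supp f) \<Longrightarrow> lext (\<lambda>x. k * f x) \<phi> = (\<lambda>d. k * lext f \<phi> d)"
proof -
  assume a: "finite (supp f)"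
  have "lext (\<lambda>x. k * f x) \<phi> = (\<lambda>d. \<Sum>c\<in>supp f. (k * f c) * \<phi> c d)"
    by (rule lext_superset) (use a in \<open>auto simp: supp_def\<close>)
  then show ?thesis by (simp add: lext_def sum_distrib_left mult.assoc)
qed

lemma lext_uminus: "finite (supp f) \<Longrightarrow> lext (- f) \<phi> = - lext f \<phi>"
  using lext_scale[of f "-1" \<phi>] by (simp add: fun_eq_iff fun_Compl_def)

lemma lext_diff: "finite (supp f) \<Longrightarrow> finite (supp g) \<Longrightarrow> lext (f - g) \<phi> = lext f \<phi> - lext g \<phi>"
  using lext_add[of f "-g" \<phi>] lext_uminus[of g \<phi>] by simp

lemma lext_zero[simp]: "lext 0 \<phi> = 0"
  by (simp add: lext_def fun_eq_iff)

lemma lext_sum: "(\<And>i. i \<in> I \<Longrightarrow> finite (supp (F i))) \<Longrightarrow> lext (\<Sum>i\<in>I. F i) \<phi> = (\<Sum>i\<in>I. lext (F i) \<phi>)"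
proof (induction I rule: infinite_finite_induct)
  case (insert x I)
  have f1: "finite (supp (F x))" using insert by simp
  have ih: "lext (sum F I) \<phi> = (\<Sum>i\<in>I. lext (F i) \<phi>)" using insert.IH insert.prems by auto
  have f2: "finite (supp (\<Sum>i\<in>I. F i))" by (rule fin_sum) (use insert in simp)
  have "lext (\<Sum>i\<in>insert x I. F i) \<phi> = lext (F x + (\<Sum>i\<in>I. F i)) \<phi>" by (subst sum.insert) (use insert(1,2) in auto)
  also have "\<dots> = lext (F x) \<phi> + lext (\<Sum>i\<in>I. F i) \<phi>" by (rule lext_add[OF f1 f2])
  also have "\<dots> = (\<Sum>i\<in>insert x I. lext (F i) \<phi>)" using insert(1,2) ih by (simp add: sum.insert)
  finally show ?case .
qed auto

lemma lext_bv[simp]: "lext (bv c) \<phi> = \<phi> c"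
  by (simp add: lext_def) (simp add: bv_def)

lemma lext_cong: "(\<And>c. c \<in> supp f \<Longrightarrow> \<phi> c = \<psi> c) \<Longrightarrow> lext f \<phi> = lext f \<psi>"
  by (simp add: lext_def)

lemma lext_as_sum: "finite (supp f) \<Longrightarrow> f = (\<Sum>c\<in>supp f. (\<lambda>d. f c * bv c d))"
  by (rule ext) (auto simp: fsum_apply bv_def supp_def if_distrib cong: if_cong)

lemma lext_lext: "finite (supp f) \<Longrightarrow> (\<And>c. c \<in> supp f \<Longrightarrow> finite (supp (\<psi> c))) \<Longrightarrow>
   lext (lext f \<psi>) \<phi> = lext f (\<lambda>c. lext (\<psi> c) \<phi>)"
proof -
  assume a: "finite (supp f)" and b: "\<And>c. c \<in> supp f \<Longrightarrow> finite (supp (\<psi> c))"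
  have e: "lext f \<psi> = (\<Sum>c\<in>supp f. (\<lambda>d. f c * \<psi> c d))"
    by (simp add: lext_def fun_eq_iff fsum_apply)
  have fin: "\<And>c. c \<in> supp f \<Longrightarrow> finite (supp (\<lambda>d. f c * \<psi> c d))"
    using b by (auto simp: supp_def elim!: finite_subset[rotated])
  show ?thesis
    unfolding e using fin b
    by (simp add: lext_sum lext_scale) (simp add: lext_def fun_eq_iff fsum_apply)
qed

lemma lext_id: "finite (supp f) \<Longrightarrow> lext f bv = f"
  by (rule ext) (auto simp: lext_def bv_def supp_def if_distrib cong: if_cong)


definition gact :: "nat \<Rightarrow> word set \<Rightarrow> cell \<Rightarrow> cell" where
  "gact n g c = (gmul n g (fst c), snd c)"

lemma act_alt: "act n g f = lext f (\<lambda>c. bv (gact n g c))"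
  unfolding act_def gact_def by (intro arg_cong[where f = "lext f"] ext) (auto split: prod.splits)

lemma act2_alt: "act2 n g F = lext F (\<lambda>cc. bv (gact n g (fst cc), gact n g (snd cc)))"
  unfolding act2_def gact_def by (intro arg_cong[where f = "lext F"] ext) (auto split: prod.splits simp: tens_bv)

lemma ev_fin[simp,intro]: "finite (supp (ev n u e))"
  by (simp add: ev_def)

lemma act_ev: "u \<in> words n \<Longrightarrow> v \<in> words n \<Longrightarrow> act n (cls n v) (ev n u e) = ev n (v @ u) e"
  by (simp add: act_alt ev_def gact_def gmul_cls)

lemma act_add: "finite (supp f) \<Longrightarrow> finite (supp g) \<Longrightarrow> act n h (f + g) = act n h f + act n h g"
  by (simp add: act_alt lext_add)
lemma act_diff: "finite (supp f) \<Longrightarrow> finite (supp g) \<Longrightarrow> act n h (f - g) = act n h f - act n h g"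
  by (simp add: act_alt lext_diff)
lemma act2_add: "finite (supp f) \<Longrightarrow> finite (supp g) \<Longrightarrow> act2 n h (f + g) = act2 n h f + act2 n h g"
  by (simp add: act2_alt lext_add)
lemma act2_diff: "finite (supp f) \<Longrightarrow> finite (supp g) \<Longrightarrow> act2 n h (f - g) = act2 n h f - act2 n h g"
  by (simp add: act2_alt lext_diff)
lemma act2_sum: "(\<And>i. i \<in> I \<Longrightarrow> finite (supp (F i))) \<Longrightarrow> act2 n h (\<Sum>i\<in>I. F i) = (\<Sum>i\<in>I. act2 n h (F i))"
  by (simp add: act2_alt lext_sum)

lemma act_fin[simp,intro]: "finite (supp f) \<Longrightarrow> finite (supp (act n g f))"
proof -
  assume a: "finite (supp f)"
  have "act n g f = (\<Sum>c\<in>supp f. (\<lambda>d. f c * bv (gact n g c) d))"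
    by (simp add: act_alt lext_def fun_eq_iff fsum_apply)
  moreover have "finite (supp (\<Sum>c\<in>supp f. (\<lambda>d. f c * bv (gact n g c) d)))"
    by (rule fin_sum) (auto simp: supp_def bv_def)
  ultimately show ?thesis by simp
qed

lemma supp_lext: "supp (lext f \<phi>) \<subseteq> (\<Union>c\<in>supp f. supp (\<phi> c))"
proof
  fix d assume "d \<in> supp (lext f \<phi>)"
  then have "(\<Sum>c\<in>supp f. f c * \<phi> c d) \<noteq> 0" by (simp add: supp_def lext_def)
  then obtain c where "c \<in> supp f" "f c * \<phi> c d \<noteq> 0" by (meson sum.not_neutral_contains_not_neutral)
  then show "d \<in> (\<Union>c\<in>supp f. supp (\<phi> c))" by (auto simp: supp_def)
qed

lemma fin_lext[simp,intro]: "finite (supp f) \<Longrightarrow> (\<And>c. c \<in> supp f \<Longrightarrow> finite (supp (\<phi> c))) \<Longrightarrow> finite (supp (lext f \<phi>))"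
  by (rule finite_subset[OF supp_lext]) auto

lemma act2_fin[simp,intro]: "finite (supp F) \<Longrightarrow> finite (supp (act2 n g F))"
  unfolding act2_alt by (rule fin_lext) auto

lemma act2_tens: "finite (supp f) \<Longrightarrow> finite (supp h) \<Longrightarrow>
  act2 n g (tens f h) = tens (act n g f) (act n g h)"
proof -
  assume a: "finite (supp f)" "finite (supp h)"
  have "act2 n g (tens f h) = (\<lambda>d. \<Sum>cc\<in>supp f \<times> supp h. tens f h cc * bv (gact n g (fst cc), gact n g (snd cc)) d)"
    unfolding act2_alt by (rule lext_superset) (use a supp_tens[of f h] in auto)
  also have "\<dots> = tens (act n g f) (act n g h)"
  proof (rule ext, clarify)
    fix d1 d2
    have "(\<Sum>cc\<in>supp f \<times> supp h. tens f h cc * bv (gact n g (fst cc), gact n g (snd cc)) (d1, d2))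
        = (\<Sum>c\<in>supp f. \<Sum>c'\<in>supp h. (f c * bv (gact n g c) d1) * (h c' * bv (gact n g c') d2))"
      by (auto simp: sum.cartesian_product tens_def bv_def intro!: sum.cong)
    also have "\<dots> = (\<Sum>c\<in>supp f. f c * bv (gact n g c) d1) * (\<Sum>c'\<in>supp h. h c' * bv (gact n g c') d2)"
      by (simp add: sum_product)
    finally show "(\<Sum>cc\<in>supp f \<times> supp h. tens f h cc * bv (gact n g (fst cc), gact n g (snd cc)) (d1, d2))
        = tens (act n g f) (act n g h) (d1, d2)"
      by (simp add: tens_def act_alt lext_def)
  qed
  finally show ?thesis .
qed

definition Gcells :: "nat \<Rightarrow> cell set" where "Gcells n = {c. fst c \<in> Gcar n}"

lemma gact_comp: "g \<in> Gcar n \<Longrightarrow> h \<in> Gcar n \<Longrightarrow> c \<in> Gcells n \<Longrightarrow> gact n g (gact n h c) = gact n (gmul n g h) c"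
  by (simp add: gact_def Gcells_def gmul_assoc)

lemma act2_comp: "g \<in> Gcar n \<Longrightarrow> h \<in> Gcar n \<Longrightarrow> finite (supp F) \<Longrightarrow> supp F \<subseteq> Gcells n \<times> Gcells n \<Longrightarrow>
   act2 n g (act2 n h F) = act2 n (gmul n g h) F"
  unfolding act2_alt
  by (subst lext_lext) (auto intro!: lext_cong simp: gact_comp)

lemma act2_one: "finite (supp F) \<Longrightarrow> supp F \<subseteq> Gcells n \<times> Gcells n \<Longrightarrow> act2 n (cls n []) F = F"
proof -
  assume a: "finite (supp F)" "supp F \<subseteq> Gcells n \<times> Gcells n"
  have "act2 n (cls n []) F = lext F bv"
    unfolding act2_alt using a by (intro lext_cong) (auto simp: gact_def gmul_one Gcells_def)
  then show ?thesis using a by (simp add: lext_id)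
qed

lemma act_comp: "g \<in> Gcar n \<Longrightarrow> h \<in> Gcar n \<Longrightarrow> finite (supp F) \<Longrightarrow> supp F \<subseteq> Gcells n \<Longrightarrow>
   act n g (act n h F) = act n (gmul n g h) F"
  unfolding act_alt
  by (subst lext_lext) (auto intro!: lext_cong simp: gact_comp)

lemma cells_iff: "c \<in> cells n r \<longleftrightarrow> fst c \<in> Gcar n \<and> valid_gen n (snd c) \<and> deg (snd c) = r"
  by (cases c) (simp add: cells_def)

lemma Pmod_iff: "f \<in> Pmod n r \<longleftrightarrow> finite (supp f) \<and> supp f \<subseteq> cells n r"
  by (simp add: Pmod_def)

lemma ev_Pmod[simp]: "u \<in> words n \<Longrightarrow> valid_gen n e \<Longrightarrow> deg e = r \<Longrightarrow> ev n u e \<in> Pmod n r"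
  by (simp add: Pmod_iff ev_def cells_iff)

lemma Pmod_add[simp]: "f \<in> Pmod n r \<Longrightarrow> g \<in> Pmod n r \<Longrightarrow> f + g \<in> Pmod n r"
  using supp_add[of f g] by (auto simp: Pmod_iff)
lemma Pmod_diff[simp]: "f \<in> Pmod n r \<Longrightarrow> g \<in> Pmod n r \<Longrightarrow> f - g \<in> Pmod n r"
  using supp_diff[of f g] by (auto simp: Pmod_iff)
lemma Pmod_zero[simp]: "0 \<in> Pmod n r"
  by (simp add: Pmod_iff)
lemma Pmod_sum[simp]: "(\<And>i. i \<in> I \<Longrightarrow> F i \<in> Pmod n r) \<Longrightarrow> (\<Sum>i\<in>I. F i) \<in> Pmod n r"
  by (induction I rule: infinite_finite_induct) auto
lemma Pmod_fin: "f \<in> Pmod n r \<Longrightarrow> finite (supp f)"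
  by (simp add: Pmod_iff)

definition PP2 :: "nat \<Rightarrow> nat \<Rightarrow> nat \<Rightarrow> (cell \<times> cell \<Rightarrow> int) set" where
  "PP2 n r s = {F. finite (supp F) \<and> supp F \<subseteq> cells n r \<times> cells n s}"

lemma PP2_add[simp]: "f \<in> PP2 n r s \<Longrightarrow> g \<in> PP2 n r s \<Longrightarrow> f + g \<in> PP2 n r s"
  using supp_add[of f g] by (auto simp: PP2_def)
lemma PP2_diff[simp]: "f \<in> PP2 n r s \<Longrightarrow> g \<in> PP2 n r s \<Longrightarrow> f - g \<in> PP2 n r s"
  using supp_diff[of f g] by (auto simp: PP2_def)
lemma PP2_zero[simp]: "0 \<in> PP2 n r s"
  by (simp add: PP2_def)
lemma PP2_sum[simp]: "(\<And>i. i \<in> I \<Longrightarrow> F i \<in> PP2 n r s) \<Longrightarrow> (\<Sum>i\<in>I. F i) \<in> PP2 n r s"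
  by (induction I rule: infinite_finite_induct) auto
lemma tens_PP2[simp]: "f \<in> Pmod n r \<Longrightarrow> g \<in> Pmod n s \<Longrightarrow> tens f g \<in> PP2 n r s"
  using supp_tens[of f g] by (auto simp: PP2_def Pmod_iff)

lemma PP2_PPmod: "F \<in> PP2 n r s \<Longrightarrow> F \<in> PPmod n (r + s)"
  by (auto simp: PP2_def PPmod_def)

lemma PPmod_add[simp]: "f \<in> PPmod n m \<Longrightarrow> g \<in> PPmod n m \<Longrightarrow> f + g \<in> PPmod n m"
  using supp_add[of f g] by (auto simp: PPmod_def)
lemma PPmod_diff[simp]: "f \<in> PPmod n m \<Longrightarrow> g \<in> PPmod n m \<Longrightarrow> f - g \<in> PPmod n m"
  using supp_diff[of f g] by (auto simp: PPmod_def)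
lemma PPmod_fin: "F \<in> PPmod n m \<Longrightarrow> finite (supp F)"
  by (simp add: PPmod_def)
lemma PPmod_Gcells: "F \<in> PPmod n m \<Longrightarrow> supp F \<subseteq> Gcells n \<times> Gcells n"
proof
  fix cc assume F: "F \<in> PPmod n m" and "cc \<in> supp F"
  then obtain r s where "fst cc \<in> cells n r" "snd cc \<in> cells n s" by (auto simp: PPmod_def)
  then show "cc \<in> Gcells n \<times> Gcells n" by (cases cc) (auto simp: Gcells_def cells_iff)
qed

lemma act2_PPmod: "g \<in> Gcar n \<Longrightarrow> F \<in> PPmod n m \<Longrightarrow> act2 n g F \<in> PPmod n m"
proof -
  assume g: "g \<in> Gcar n" and F: "F \<in> PPmod n m"
  let ?T = "{(c, c'). \<exists>r s. c \<in> cells n r \<and> c' \<in> cells n s \<and> r + s = m}"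
  have "supp (act2 n g F) \<subseteq> (\<Union>cc\<in>supp F. supp (bv (gact n g (fst cc), gact n g (snd cc))))"
    unfolding act2_alt by (rule supp_lext)
  then have 1: "supp (act2 n g F) \<subseteq> (\<Union>cc\<in>supp F. {(gact n g (fst cc), gact n g (snd cc))})"
    by simp
  have 2: "(gact n g (fst cc), gact n g (snd cc)) \<in> ?T" if "cc \<in> supp F" for cc
  proof -
    have "cc \<in> ?T" using that F unfolding PPmod_def by blast
    then obtain r s where rs: "fst cc \<in> cells n r" "snd cc \<in> cells n s" "r + s = m" by auto
    have "gact n g (fst cc) \<in> cells n r" using rs(1) g by (simp add: gact_def cells_iff gmul_Gcar)
    moreover have "gact n g (snd cc) \<in> cells n s" using rs(2) g by (simp add: gact_def cells_iff gmul_Gcar)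
    ultimately show ?thesis using rs(3) by blast
  qed
  have "supp (act2 n g F) \<subseteq> ?T" using 1 2 by blast
  moreover have "finite (supp (act2 n g F))" using F by (simp add: PPmod_fin)
  ultimately show ?thesis unfolding PPmod_def by blast
qed


lemma gmul_one_right: "g \<in> Gcar n \<Longrightarrow> gmul n g (cls n []) = g"
  by (auto elim!: GcarE simp: gmul_cls)

fun Bv :: "nat \<Rightarrow> gen \<Rightarrow> (cell \<times> cell \<Rightarrow> int)" where
  "Bv n X = tens (ev n [] X) (ev n [] X)"
| "Bv n (Y i) = tens (ev n [] (Y i)) (ev n [la i] X) + tens (ev n [] X) (ev n [] (Y i))"
| "Bv n (Z i) = tens (ev n [] (Z i)) (ev n [lb i] X) + tens (ev n [] X) (ev n [] (Z i))"
| "Bv n W = tens (ev n [] W) (ev n (pw (n - 1) @ [la n, lb n]) X) + tens (ev n [] X) (ev n [] W) + Delta11 n"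

definition Phi :: "nat \<Rightarrow> cell \<Rightarrow> (cell \<times> cell \<Rightarrow> int)" where
  "Phi n c = act2 n (fst c) (Bv n (snd c))"

definition DD :: "nat \<Rightarrow> (cell \<Rightarrow> int) \<Rightarrow> (cell \<times> cell \<Rightarrow> int)" where
  "DD n f = lext f (Phi n)"

lemma Aterm_Pmod: "1 \<le> j \<Longrightarrow> j \<le> n \<Longrightarrow> Aterm n j \<in> Pmod n 1"
  by (simp add: Aterm_def)
lemma Bterm_Pmod: "1 \<le> j \<Longrightarrow> j \<le> n \<Longrightarrow> Bterm n j \<in> Pmod n 1"
  by (simp add: Bterm_def)
lemma evY_Pmod: "1 \<le> i \<Longrightarrow> i \<le> n \<Longrightarrow> u \<in> words n \<Longrightarrow> ev n u (Y i) \<in> Pmod n 1"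
  by simp
lemma evZ_Pmod: "1 \<le> i \<Longrightarrow> i \<le> n \<Longrightarrow> u \<in> words n \<Longrightarrow> ev n u (Z i) \<in> Pmod n 1"
  by simp
lemma w1: "1 \<le> i \<Longrightarrow> i \<le> n \<Longrightarrow> pw (i - 1) \<in> words n" by simp
lemma w2: "1 \<le> i \<Longrightarrow> i \<le> n \<Longrightarrow> pw (i - 1) @ [la i] \<in> words n" by simp
lemma w3: "1 \<le> i \<Longrightarrow> i \<le> n \<Longrightarrow> pw (i - 1) @ [la i, lb i, lai i] \<in> words n" by simp
lemma w4: "i \<le> n \<Longrightarrow> pw i \<in> words n" by simp
lemma w5: "1 \<le> n \<Longrightarrow> [lb n] \<in> words n" by (simp add: lb_def)

lemma Delta11_PP2: "1 \<le> n \<Longrightarrow> Delta11 n \<in> PP2 n 1 1"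
  unfolding Delta11_def
  apply (intro PP2_add PP2_diff PP2_sum tens_PP2 Pmod_add Aterm_Pmod Bterm_Pmod evY_Pmod evZ_Pmod w1 w2 w3 w4 w5 words_Nil)
  apply (auto simp del: One_nat_def)
  done

lemma PP2_PPmod': "F \<in> PP2 n r s \<Longrightarrow> m = r + s \<Longrightarrow> F \<in> PPmod n m"
  using PP2_PPmod by blast

lemma Bv_PPmod: "1 \<le> n \<Longrightarrow> valid_gen n e \<Longrightarrow> Bv n e \<in> PPmod n (deg e)"
proof (cases e)
  case X
  then show ?thesis by (simp del: One_nat_def) (rule PP2_PPmod'[where r=0 and s=0], rule tens_PP2, simp_all)
next
  case (Y i)
  assume "valid_gen n e"
  then have i: "1 \<le> i" "i \<le> n" using Y by auto
  have l: "[la i] \<in> words n" using i by (simp add: la_def)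
  show ?thesis using Y i
    apply (simp del: One_nat_def)
    apply (rule PPmod_add)
     apply (rule PP2_PPmod'[where r=1 and s=0], rule tens_PP2, rule evY_Pmod, simp_all add: l)
    apply (rule PP2_PPmod'[where r=0 and s=1], rule tens_PP2, simp, rule evY_Pmod, simp_all)
    done
next
  case (Z i)
  assume "valid_gen n e"
  then have i: "1 \<le> i" "i \<le> n" using Z by auto
  have l: "[lb i] \<in> words n" using i by (simp add: lb_def)
  show ?thesis using Z i
    apply (simp del: One_nat_def)
    apply (rule PPmod_add)
     apply (rule PP2_PPmod'[where r=1 and s=0], rule tens_PP2, rule evZ_Pmod, simp_all add: l)
    apply (rule PP2_PPmod'[where r=0 and s=1], rule tens_PP2, simp, rule evZ_Pmod, simp_all)
    done
next
  case W
  assume n: "1 \<le> n"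
  have l: "pw (n - 1) @ [la n, lb n] \<in> words n" using n by (simp add: la_def lb_def)
  show ?thesis using W n
    apply (simp del: One_nat_def)
    apply (rule PPmod_add)+
      apply (rule PP2_PPmod'[where r=2 and s=0], rule tens_PP2, simp, simp add: l, simp)
     apply (rule PP2_PPmod'[where r=0 and s=2], rule tens_PP2, simp, simp, simp)
    apply (rule PP2_PPmod'[where r=1 and s=1], rule Delta11_PP2[OF n], simp)
    done
qed

lemma Phi_PPmod: "1 \<le> n \<Longrightarrow> c \<in> cells n r \<Longrightarrow> Phi n c \<in> PPmod n r"
  unfolding Phi_def by (auto simp: cells_iff intro!: act2_PPmod Bv_PPmod)

lemma lext_PPmod: "finite (supp f) \<Longrightarrow> (\<And>c. c \<in> supp f \<Longrightarrow> \<phi> c \<in> PPmod n m) \<Longrightarrow> lext f \<phi> \<in> PPmod n m"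
proof -
  assume f: "finite (supp f)" and p: "\<And>c. c \<in> supp f \<Longrightarrow> \<phi> c \<in> PPmod n m"
  let ?T = "{(c, c'). \<exists>r s. c \<in> cells n r \<and> c' \<in> cells n s \<and> r + s = m}"
  have "supp (lext f \<phi>) \<subseteq> (\<Union>c\<in>supp f. supp (\<phi> c))" by (rule supp_lext)
  moreover have "supp (\<phi> c) \<subseteq> ?T" if "c \<in> supp f" for c using p[OF that] unfolding PPmod_def by blast
  ultimately have "supp (lext f \<phi>) \<subseteq> ?T" by blast
  moreover have "finite (supp (lext f \<phi>))" using f p by (intro fin_lext) (auto intro: PPmod_fin)
  ultimately show ?thesis unfolding PPmod_def by blast
qed

lemma DD_PPmod: "1 \<le> n \<Longrightarrow> f \<in> Pmod n r \<Longrightarrow> DD n f \<in> PPmod n r"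
  unfolding DD_def
  by (rule lext_PPmod) (auto simp: Pmod_iff intro!: Phi_PPmod)

lemma DD_add: "f \<in> Pmod n r \<Longrightarrow> f' \<in> Pmod n r \<Longrightarrow> DD n (f + f') = DD n f + DD n f'"
  by (simp add: DD_def lext_add Pmod_fin)

lemma Phi_gact: "1 \<le> n \<Longrightarrow> g \<in> Gcar n \<Longrightarrow> c \<in> cells n r \<Longrightarrow> Phi n (gact n g c) = act2 n g (Phi n c)"
proof -
  assume n: "1 \<le> n" and g: "g \<in> Gcar n" and c: "c \<in> cells n r"
  have B: "Bv n (snd c) \<in> PPmod n (deg (snd c))" using c n by (intro Bv_PPmod) (auto simp: cells_iff)
  have h: "fst c \<in> Gcar n" using c by (simp add: cells_iff)
  have "Phi n (gact n g c) = act2 n (gmul n g (fst c)) (Bv n (snd c))"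
    by (simp add: Phi_def gact_def)
  also have "\<dots> = act2 n g (act2 n (fst c) (Bv n (snd c)))"
    by (rule act2_comp[OF g h PPmod_fin[OF B] PPmod_Gcells[OF B], symmetric])
  finally show ?thesis by (simp add: Phi_def)
qed

lemma DD_act: "1 \<le> n \<Longrightarrow> g \<in> Gcar n \<Longrightarrow> f \<in> Pmod n r \<Longrightarrow> DD n (act n g f) = act2 n g (DD n f)"
proof -
  assume n: "1 \<le> n" and g: "g \<in> Gcar n" and f: "f \<in> Pmod n r"
  have ff: "finite (supp f)" using f by (simp add: Pmod_iff)
  have "DD n (act n g f) = lext f (\<lambda>c. lext (bv (gact n g c)) (Phi n))"
    unfolding DD_def act_alt by (rule lext_lext[OF ff]) simp
  also have "\<dots> = lext f (\<lambda>c. act2 n g (Phi n c))"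
  proof (rule lext_cong)
    fix c assume "c \<in> supp f"
    then have "c \<in> cells n r" using f by (auto simp: Pmod_iff)
    then show "lext (bv (gact n g c)) (Phi n) = act2 n g (Phi n c)" by (simp add: Phi_gact[OF n g])
  qed
  also have "\<dots> = act2 n g (DD n f)"
  proof -
    have "\<And>c. c \<in> supp f \<Longrightarrow> finite (supp (Phi n c))"
    proof -
      fix c assume "c \<in> supp f"
      then have "c \<in> cells n r" using f by (auto simp: Pmod_iff)
      then show "finite (supp (Phi n c))" by (rule PPmod_fin[OF Phi_PPmod[OF n]])
    qed
    then show ?thesis unfolding DD_def act2_alt by (subst lext_lext[OF ff]) simp_all
  qed
  finally show ?thesis .
qed

lemma ZG_linear_DD: "1 \<le> n \<Longrightarrow> ZG_linear n r (DD n)"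
  unfolding ZG_linear_def by (auto intro: DD_PPmod DD_add DD_act)

lemma DD_ev: "DD n (ev n u e) = Phi n (cls n u, e)"
  by (simp add: DD_def ev_def)

lemma Phi_X: "h \<in> Gcar n \<Longrightarrow> Phi n (h, X) = bv ((h, X), (h, X))"
proof -
  assume h: "h \<in> Gcar n"
  have "act n h (ev n [] X) = bv (h, X)" by (simp add: act_alt ev_def gact_def gmul_one_right[OF h])
  then show ?thesis by (simp add: Phi_def act2_tens tens_bv)
qed

lemma eps2_superset:
  assumes "finite S" "supp F \<subseteq> S"
  shows "eps2 F = (\<Sum>cc\<in>S. if snd (fst cc) = X \<and> snd (snd cc) = X then F cc else 0)"
  unfolding eps2_def
  by (rule sum.mono_neutral_left[OF assms(1) assms(2)]) (simp add: supp_def)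

lemma DD_eps: "f \<in> Pmod n 0 \<Longrightarrow> eps2 (DD n f) = eps f"
proof -
  assume f: "f \<in> Pmod n 0"
  have cX: "snd c = X \<and> fst c \<in> Gcar n" if "c \<in> supp f" for c
  proof -
    have "c \<in> cells n 0" using f that unfolding Pmod_iff by blast
    then have "fst c \<in> Gcar n" "deg (snd c) = 0" unfolding cells_iff by blast+
    moreover have "snd c = X" using \<open>deg (snd c) = 0\<close> by (cases "snd c") simp_all
    ultimately show ?thesis by blast
  qed
  have fin: "finite (supp f)" using f by (simp add: Pmod_iff)
  have L: "DD n f = lext f (\<lambda>c. bv (c, c))"
    unfolding DD_def
  proof (rule lext_cong)
    fix c assume "c \<in> supp f"
    then have "snd c = X" "fst c \<in> Gcar n" using cX by blast+
    then show "Phi n c = bv (c, c)" using Phi_X[of "fst c" n] by (cases c) simp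
  qed
  have DDe: "DD n f cc = (if fst cc = snd cc then f (fst cc) else 0)" for cc
  proof -
    have "DD n f cc = (\<Sum>c\<in>supp f. f c * bv (c, c) cc)" by (simp add: L lext_def)
    also have "\<dots> = (\<Sum>c\<in>supp f. if c = fst cc \<and> c = snd cc then f c else 0)"
    proof (rule sum.cong)
      fix c
      have e: "(cc = (c, c)) = (c = fst cc \<and> c = snd cc)" by (cases cc) auto
      show "f c * bv (c, c) cc = (if c = fst cc \<and> c = snd cc then f c else 0)"
        unfolding bv_def e by auto
    qed simp
    also have "\<dots> = (if fst cc = snd cc then f (fst cc) else 0)"
    proof (cases "fst cc = snd cc")
      case True
      then have "(\<Sum>c\<in>supp f. if c = fst cc \<and> c = snd cc then f c else 0) = (\<Sum>c\<in>supp f. if c = fst cc then f c else 0)"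
        by simp
      also have "\<dots> = (if fst cc \<in> supp f then f (fst cc) else 0)" using fin by (simp add: sum.delta')
      also have "\<dots> = f (fst cc)" by (simp add: supp_def)
      finally show ?thesis using True by simp
    next
      case False
      then have "\<And>c. \<not> (c = fst cc \<and> c = snd cc)" by blast
      then have "(\<Sum>c\<in>supp f. if c = fst cc \<and> c = snd cc then f c else 0) = 0"
        by (intro sum.neutral) simp
      then show ?thesis using False by simp
    qed
    finally show ?thesis .
  qed
  have "supp (DD n f) \<subseteq> (\<lambda>c. (c, c)) ` supp f"
  proof
    fix cc assume "cc \<in> supp (DD n f)"
    then have "DD n f cc \<noteq> 0" unfolding supp_def by blast
    then have "fst cc = snd cc" "f (fst cc) \<noteq> 0" unfolding DDe by (simp_all split: if_splits)
    then have "cc = (fst cc, fst cc)" "fst cc \<in> supp f" by (simp_all add: supp_def prod_eq_iff)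
    then show "cc \<in> (\<lambda>c. (c, c)) ` supp f" by blast
  qed
  then have "eps2 (DD n f) = (\<Sum>cc\<in>(\<lambda>c. (c, c)) ` supp f. if snd (fst cc) = X \<and> snd (snd cc) = X then DD n f cc else 0)"
    using fin by (intro eps2_superset) simp_all
  also have "\<dots> = (\<Sum>c\<in>supp f. if snd c = X \<and> snd c = X then DD n f (c, c) else 0)"
    by (subst sum.reindex) (simp_all add: inj_on_def)
  also have "\<dots> = (\<Sum>c\<in>supp f. if snd c = X then f c else 0)"
    by (rule sum.cong) (simp_all add: DDe)
  also have "\<dots> = eps f" by (simp add: eps_def)
  finally show ?thesis .
qed



section \<open>Fox derivatives of the relator\<close>

lemma fox_append: "fox g (u @ w) = fox g u @ map (\<lambda>(x, k). (u @ x, k)) (fox g w)"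
  by (induction u) (auto simp: case_prod_beta comp_def)

lemma fox_comm_other: "j \<noteq> i \<Longrightarrow> fox (i, b) (comm j) = []"
  by (simp add: comm_def la_def lb_def lai_def lbi_def)

lemma fox_concat_other: "i \<notin> set js \<Longrightarrow> fox (i, b) (concat (map comm js)) = []"
  by (induction js) (auto simp: fox_append fox_comm_other)

lemma fox_comm_a: "fox (i, False) (comm i) = [([], 1), ([la i, lb i, lai i], -1)]"
  by (simp add: comm_def la_def lb_def lai_def lbi_def)

lemma fox_comm_b: "fox (i, True) (comm i) = [([la i], 1), ([la i, lb i, lai i, lbi i], -1)]"
  by (simp add: comm_def la_def lb_def lai_def lbi_def)

lemma pw_split: "1 \<le> i \<Longrightarrow> i \<le> n \<Longrightarrow> pw n = pw (i - 1) @ comm i @ concat (map comm [Suc i..<Suc n])"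
proof -
  assume i: "1 \<le> i" "i \<le> n"
  have "[1..<n+1] = [1..<i] @ [i..<n+1]" using i upt_add_eq_append[of 1 i "n + 1 - i"] by simp
  moreover have "[i..<n+1] = i # [Suc i..<Suc n]" using i by (simp add: upt_conv_Cons)
  ultimately show ?thesis using i by (simp add: pw_def)
qed

lemma fox_pw_a: "1 \<le> i \<Longrightarrow> i \<le> n \<Longrightarrow> fox (i, False) (pw n) = [(pw (i - 1), 1), (pw (i - 1) @ [la i, lb i, lai i], -1)]"
proof -
  assume i: "1 \<le> i" "i \<le> n"
  have a: "fox (i, False) (pw (i - 1)) = []" unfolding pw_def using i by (intro fox_concat_other) auto
  have b: "fox (i, False) (concat (map comm [Suc i..<Suc n])) = []" by (intro fox_concat_other) auto
  show ?thesis by (simp only: pw_split[OF i] fox_append a b fox_comm_a) simp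
qed

lemma fox_pw_b: "1 \<le> i \<Longrightarrow> i \<le> n \<Longrightarrow> fox (i, True) (pw n) = [(pw (i - 1) @ [la i], 1), (pw (i - 1) @ [la i, lb i, lai i, lbi i], -1)]"
proof -
  assume i: "1 \<le> i" "i \<le> n"
  have a: "fox (i, True) (pw (i - 1)) = []" unfolding pw_def using i by (intro fox_concat_other) auto
  have b: "fox (i, True) (concat (map comm [Suc i..<Suc n])) = []" by (intro fox_concat_other) auto
  show ?thesis by (simp only: pw_split[OF i] fox_append a b fox_comm_b) simp
qed

lemma fcomb2: "v \<in> words n \<Longrightarrow> u1 \<in> words n \<Longrightarrow> u2 \<in> words n \<Longrightarrow>
  fcomb n (cls n v) [(u1, 1), (u2, -1)] e = ev n (v @ u1) e - ev n (v @ u2) e"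
  by (auto simp: fcomb_def fun_eq_iff gmul_cls ev_def bv_def)

definition "y0 n v i = ev n (v @ pw (i - 1)) (Y i)"
definition "yg n v i = ev n (v @ pw (i - 1) @ [la i, lb i, lai i]) (Y i)"
definition "za n v i = ev n (v @ pw (i - 1) @ [la i]) (Z i)"
definition "zQ n v i = ev n (v @ pw i) (Z i)"
definition "x0 n v i = ev n (v @ pw (i - 1)) X"
definition "xa n v i = ev n (v @ pw (i - 1) @ [la i]) X"
definition "xb n v i = ev n (v @ pw (i - 1) @ [la i, lb i]) X"
definition "xg n v i = ev n (v @ pw (i - 1) @ [la i, lb i, lai i]) X"
definition "TT n v i = y0 n v i - yg n v i + za n v i - zQ n v i"
definition "SS n v i = (\<Sum>j\<in>{1..<i}. TT n v j)"

lemmas atom_defs = y0_def yg_def za_def zQ_def x0_def xa_def xb_def xg_def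

lemma atoms_fin[simp]:
  "finite (supp (y0 n v i))" "finite (supp (yg n v i))" "finite (supp (za n v i))" "finite (supp (zQ n v i))"
  "finite (supp (x0 n v i))" "finite (supp (xa n v i))" "finite (supp (xb n v i))" "finite (supp (xg n v i))"
  "finite (supp (TT n v i))" "finite (supp (SS n v i))"
  by (simp_all add: atom_defs TT_def SS_def)

context
  fixes n :: nat and v :: word and i :: nat
  assumes v: "v \<in> words n" and i1: "1 \<le> i" and i2: "i \<le> n"
begin

lemma wA: "pw (i - 1) \<in> words n" "[la i] \<in> words n" "[lb i] \<in> words n" "[lai i] \<in> words n" "[lbi i] \<in> words n"
  "la i \<in> letters n" "lb i \<in> letters n" "lai i \<in> letters n" "lbi i \<in> letters n" "pw i \<in> words n"
  using i1 i2 by simp_all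

lemma atoms_Pmod:
  "y0 n v i \<in> Pmod n 1" "yg n v i \<in> Pmod n 1" "za n v i \<in> Pmod n 1" "zQ n v i \<in> Pmod n 1"
  "x0 n v i \<in> Pmod n 0" "xa n v i \<in> Pmod n 0" "xb n v i \<in> Pmod n 0" "xg n v i \<in> Pmod n 0"
  "x0 n v (Suc i) \<in> Pmod n 0" "TT n v i \<in> Pmod n 1"
  using v i1 i2 wA by (simp_all add: atom_defs TT_def)

lemma cls_c1: "cls n (v @ pw (i - 1) @ [la i, lb i, lai i, la i]) = cls n (v @ pw (i - 1) @ [la i, lb i])"
  using cls_free[of "v @ pw (i - 1) @ [la i, lb i]" n "[]" "lai i"] v wA by simp

lemma cls_c2: "cls n (v @ pw i @ [lb i]) = cls n (v @ pw (i - 1) @ [la i, lb i, lai i])"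
  using cls_free[of "v @ pw (i - 1) @ [la i, lb i, lai i]" n "[]" "lbi i"] v wA pw_minus[OF i1] by simp

lemma dmap_ev: "dmap n (ev n u e) = dP n (cls n u, e)"
  by (simp add: dmap_def ev_def)

lemma ev_c1: "ev n (v @ pw (i - 1) @ [la i, lb i, lai i, la i]) e = ev n (v @ pw (i - 1) @ [la i, lb i]) e"
  by (simp only: ev_def cls_c1)
lemma ev_c2: "ev n (v @ pw i @ [lb i]) e = ev n (v @ pw (i - 1) @ [la i, lb i, lai i]) e"
  by (simp only: ev_def cls_c2)
lemmas ev_c = ev_c1[simplified] ev_c2[simplified]

lemma dmapY: "u \<in> words n \<Longrightarrow> dmap n (ev n u (Y i)) = ev n (u @ [la i]) X - ev n u X"
  using wA unfolding dmap_ev by (simp add: gmul_cls ev_def)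
lemma dmapZ: "u \<in> words n \<Longrightarrow> dmap n (ev n u (Z i)) = ev n (u @ [lb i]) X - ev n u X"
  using wA unfolding dmap_ev by (simp add: gmul_cls ev_def)

lemma DDY: "u \<in> words n \<Longrightarrow> DD n (ev n u (Y i)) = tens (ev n u (Y i)) (ev n (u @ [la i]) X) + tens (ev n u X) (ev n u (Y i))"
  using wA by (simp add: DD_ev Phi_def act2_add act2_tens act_ev)
lemma DDZ: "u \<in> words n \<Longrightarrow> DD n (ev n u (Z i)) = tens (ev n u (Z i)) (ev n (u @ [lb i]) X) + tens (ev n u X) (ev n u (Z i))"
  using wA by (simp add: DD_ev Phi_def act2_add act2_tens act_ev)

lemma dmap_y0: "dmap n (y0 n v i) = xa n v i - x0 n v i"
  using v wA by (simp add: y0_def xa_def x0_def dmapY)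
lemma dmap_yg: "dmap n (yg n v i) = xb n v i - xg n v i"
  using v wA by (simp add: yg_def xb_def xg_def dmapY ev_c)
lemma dmap_za: "dmap n (za n v i) = xb n v i - xa n v i"
  using v wA by (simp add: za_def xb_def xa_def dmapZ)
lemma dmap_zQ: "dmap n (zQ n v i) = xg n v i - x0 n v (Suc i)"
  using v wA by (simp add: zQ_def xg_def x0_def dmapZ ev_c)

lemma DD_y0: "DD n (y0 n v i) = tens (y0 n v i) (xa n v i) + tens (x0 n v i) (y0 n v i)"
  using v wA by (simp add: y0_def xa_def x0_def DDY)
lemma DD_yg: "DD n (yg n v i) = tens (yg n v i) (xb n v i) + tens (xg n v i) (yg n v i)"
  using v wA by (simp add: yg_def xb_def xg_def DDY ev_c)
lemma DD_za: "DD n (za n v i) = tens (za n v i) (xb n v i) + tens (xa n v i) (za n v i)"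
  using v wA by (simp add: za_def xb_def xa_def DDZ)
lemma DD_zQ: "DD n (zQ n v i) = tens (zQ n v i) (xg n v i) + tens (x0 n v (Suc i)) (zQ n v i)"
  using v wA by (simp add: zQ_def xg_def x0_def DDZ ev_c)

end


definition psi :: "nat \<Rightarrow> cell \<times> cell \<Rightarrow> (cell \<times> cell \<Rightarrow> int)" where
  "psi n = (\<lambda>(c, c'). tens (dP n c) (bv c') + (\<lambda>t. (-1) ^ deg (snd c) * tens (bv c) (dP n c') t))"

lemma dPP_alt: "dPP n F = lext F (psi n)"
  by (simp add: dPP_def psi_def)

lemma dPP_add: "finite (supp f) \<Longrightarrow> finite (supp g) \<Longrightarrow> dPP n (f + g) = dPP n f + dPP n g"
  by (simp add: dPP_alt lext_add)
lemma dPP_diff: "finite (supp f) \<Longrightarrow> finite (supp g) \<Longrightarrow> dPP n (f - g) = dPP n f - dPP n g"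
  by (simp add: dPP_alt lext_diff)
lemma dPP_sum: "(\<And>i. i \<in> I \<Longrightarrow> finite (supp (F i))) \<Longrightarrow> dPP n (\<Sum>i\<in>I. F i) = (\<Sum>i\<in>I. dPP n (F i))"
  by (simp add: dPP_alt lext_sum)
lemma dmap_add: "finite (supp f) \<Longrightarrow> finite (supp g) \<Longrightarrow> dmap n (f + g) = dmap n f + dmap n g"
  by (simp add: dmap_def lext_add)
lemma dmap_diff: "finite (supp f) \<Longrightarrow> finite (supp g) \<Longrightarrow> dmap n (f - g) = dmap n f - dmap n g"
  by (simp add: dmap_def lext_diff)
lemma dmap_sum: "(\<And>i. i \<in> I \<Longrightarrow> finite (supp (F i))) \<Longrightarrow> dmap n (\<Sum>i\<in>I. F i) = (\<Sum>i\<in>I. dmap n (F i))"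
  by (simp add: dmap_def lext_sum)
lemma DD_add': "finite (supp f) \<Longrightarrow> finite (supp g) \<Longrightarrow> DD n (f + g) = DD n f + DD n g"
  by (simp add: DD_def lext_add)
lemma DD_diff: "finite (supp f) \<Longrightarrow> finite (supp g) \<Longrightarrow> DD n (f - g) = DD n f - DD n g"
  by (simp add: DD_def lext_diff)
lemma DD_sum: "(\<And>i. i \<in> I \<Longrightarrow> finite (supp (F i))) \<Longrightarrow> DD n (\<Sum>i\<in>I. F i) = (\<Sum>i\<in>I. DD n (F i))"
  by (simp add: DD_def lext_sum)

lemma sum_bv_apply: "finite (supp g) \<Longrightarrow> (\<Sum>c\<in>supp g. g c * bv c d) = g d"
  using lext_id[of g] by (simp add: lext_def fun_eq_iff)

lemma dPP_tens:
  assumes f: "f \<in> Pmod n r" and g: "finite (supp g)"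
  shows "dPP n (tens f g) = tens (dmap n f) g + (\<lambda>t. (-1) ^ r * tens f (dmap n g) t)"
proof -
  have ff: "finite (supp f)" using f by (simp add: Pmod_iff)
  have deg: "deg (snd c) = r" if "c \<in> supp f" for c
  proof -
    have "c \<in> cells n r" using f that unfolding Pmod_iff by blast
    then show ?thesis unfolding cells_iff by blast
  qed
  have "dPP n (tens f g) = (\<lambda>d. \<Sum>cc\<in>supp f \<times> supp g. tens f g cc * psi n cc d)"
    unfolding dPP_alt by (rule lext_superset) (use ff g supp_tens[of f g] in auto)
  also have "\<dots> = tens (dmap n f) g + (\<lambda>t. (-1) ^ r * tens f (dmap n g) t)"
  proof (rule ext, clarify)
    fix d1 d2
    have "(\<Sum>cc\<in>supp f \<times> supp g. tens f g cc * psi n cc (d1, d2))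
      = (\<Sum>(c, c')\<in>supp f \<times> supp g. (f c * dP n c d1) * (g c' * bv c' d2) + (-1) ^ r * ((f c * bv c d1) * (g c' * dP n c' d2)))"
    proof (rule sum.cong[OF refl], clarify)
      fix c c' assume "c \<in> supp f" "c' \<in> supp g"
      then show "tens f g (c, c') * psi n (c, c') (d1, d2) =
         f c * dP n c d1 * (g c' * bv c' d2) + (- 1) ^ r * (f c * bv c d1 * (g c' * dP n c' d2))"
        using deg by (simp add: psi_def tens_def algebra_simps)
    qed
    also have "\<dots> = (\<Sum>c\<in>supp f. \<Sum>c'\<in>supp g. (f c * dP n c d1) * (g c' * bv c' d2) + (-1) ^ r * ((f c * bv c d1) * (g c' * dP n c' d2)))"
      by (rule sum.cartesian_product[symmetric])
    also have "\<dots> = (\<Sum>c\<in>supp f. f c * dP n c d1) * (\<Sum>c'\<in>supp g. g c' * bv c' d2)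
        + (-1) ^ r * ((\<Sum>c\<in>supp f. f c * bv c d1) * (\<Sum>c'\<in>supp g. g c' * dP n c' d2))"
    proof -
      have A: "(\<Sum>c\<in>supp f. \<Sum>c'\<in>supp g. (f c * dP n c d1) * (g c' * bv c' d2) + (-1) ^ r * ((f c * bv c d1) * (g c' * dP n c' d2)))
        = (\<Sum>c\<in>supp f. \<Sum>c'\<in>supp g. (f c * dP n c d1) * (g c' * bv c' d2)) + (-1) ^ r * (\<Sum>c\<in>supp f. \<Sum>c'\<in>supp g. (f c * bv c d1) * (g c' * dP n c' d2))"
        by (simp add: sum.distrib sum_distrib_left)
      show ?thesis unfolding A by (simp only: sum_product)
    qed
    also have "\<dots> = dmap n f d1 * g d2 + (-1) ^ r * (f d1 * dmap n g d2)"
      using ff g by (simp add: sum_bv_apply dmap_def lext_def)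
    finally show "(\<Sum>cc\<in>supp f \<times> supp g. tens f g cc * psi n cc (d1, d2)) =
        (tens (dmap n f) g + (\<lambda>t. (- 1) ^ r * tens f (dmap n g) t)) (d1, d2)"
      by (simp add: tens_def)
  qed
  finally show ?thesis .
qed

lemma dPP_tens1: "f \<in> Pmod n 1 \<Longrightarrow> finite (supp g) \<Longrightarrow> dPP n (tens f g) = tens (dmap n f) g - tens f (dmap n g)"
  by (simp add: dPP_tens fun_eq_iff)
lemma dPP_tens0: "f \<in> Pmod n 0 \<Longrightarrow> finite (supp g) \<Longrightarrow> dPP n (tens f g) = tens (dmap n f) g + tens f (dmap n g)"
  by (simp add: dPP_tens fun_eq_iff)
lemma dPP_tens2: "f \<in> Pmod n 2 \<Longrightarrow> finite (supp g) \<Longrightarrow> dPP n (tens f g) = tens (dmap n f) g + tens f (dmap n g)"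
  by (simp add: dPP_tens fun_eq_iff)

lemma dmap_X: "dmap n (ev n u X) = 0"
  by (simp add: dmap_def ev_def fun_eq_iff)

lemma dmap_x[simp]: "dmap n (x0 n v i) = 0" "dmap n (xa n v i) = 0" "dmap n (xb n v i) = 0" "dmap n (xg n v i) = 0"
  by (simp_all only: atom_defs dmap_X)

lemma dmap_TT: "v \<in> words n \<Longrightarrow> 1 \<le> i \<Longrightarrow> i \<le> n \<Longrightarrow> dmap n (TT n v i) = x0 n v (Suc i) - x0 n v i"
  by (simp add: TT_def dmap_add dmap_diff dmap_y0 dmap_yg dmap_za dmap_zQ)

lemma fun_eta_plus: "(\<lambda>a. f a + g a) = f + (g :: 'a \<Rightarrow> int)" by (simp add: fun_eq_iff)
lemma fun_eta_minus: "(\<lambda>a. f a - g a) = f - (g :: 'a \<Rightarrow> int)" by (simp add: fun_eq_iff)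

lemma SS_1[simp]: "SS n v 1 = 0" "SS n v (Suc 0) = 0"
  by (simp_all add: SS_def)

lemma SS_Suc: "1 \<le> i \<Longrightarrow> SS n v (Suc i) = SS n v i + TT n v i"
  by (simp add: SS_def add.commute)

lemma SS_Pmod: "v \<in> words n \<Longrightarrow> i \<le> Suc n \<Longrightarrow> SS n v i \<in> Pmod n 1"
  unfolding SS_def
proof (rule Pmod_sum)
  fix j assume "v \<in> words n" "i \<le> Suc n" "j \<in> {1..<i}"
  then show "TT n v j \<in> Pmod n 1" using atoms_Pmod(10)[of v n j] by simp
qed

lemma dmap_SS: assumes v: "v \<in> words n" shows "1 \<le> i \<Longrightarrow> i \<le> Suc n \<Longrightarrow> dmap n (SS n v i) = x0 n v i - x0 n v 1"
proof (induction i rule: nat_induct_at_least)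
  case base then show ?case by (simp add: dmap_def lext_def fun_eq_iff)
next
  case (Suc i)
  have d: "dmap n (SS n v (Suc i)) = dmap n (SS n v i) + dmap n (TT n v i)"
    by (simp only: SS_Suc[OF Suc(1)] dmap_add[OF atoms_fin(10) atoms_fin(9)])
  have t: "dmap n (TT n v i) = x0 n v (Suc i) - x0 n v i" using Suc(1,3) v by (intro dmap_TT) auto
  have ih: "dmap n (SS n v i) = x0 n v i - x0 n v 1" using Suc by (simp add: fun_eq_iff)
  show ?case unfolding d t ih by (simp add: fun_eq_iff)
qed


definition "GG n v i = tens (SS n v i) (y0 n v i)
   - (tens (SS n v i) (yg n v i) + tens (y0 n v i - yg n v i) (yg n v i) + tens (za n v i) (yg n v i))
   + (tens (SS n v i) (za n v i) + tens (y0 n v i) (za n v i))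
   - tens (SS n v (Suc i)) (zQ n v i)"

definition "HH n v = tens (SS n v n) (y0 n v n)
   + (tens (SS n v n) (za n v n) + tens (y0 n v n) (za n v n))
   - tens (zQ n v n) (yg n v n)"

lemma GG_step:
  assumes v: "v \<in> words n" and i1: "1 \<le> i" and i2: "i \<le> n"
  shows "dPP n (GG n v i) + tens (x0 n v 1) (TT n v i) - DD n (TT n v i)
       = tens (SS n v i) (x0 n v i) - tens (SS n v (Suc i)) (x0 n v (Suc i))"
proof -
  note P = atoms_Pmod[OF v i1 i2]
  have S1: "SS n v i \<in> Pmod n 1" using v i2 by (intro SS_Pmod) auto
  have S2: "SS n v (Suc i) \<in> Pmod n 1" using v i2 by (intro SS_Pmod) auto
  have dS1: "dmap n (SS n v i) = x0 n v i - x0 n v 1" using v i1 i2 by (intro dmap_SS) auto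
  have dS2: "dmap n (SS n v (Suc i)) = x0 n v (Suc i) - x0 n v 1" using v i1 i2 by (intro dmap_SS) auto
  have dPPG: "dPP n (GG n v i) =
      (tens (dmap n (SS n v i)) (y0 n v i) - tens (SS n v i) (dmap n (y0 n v i)))
    - ((tens (dmap n (SS n v i)) (yg n v i) - tens (SS n v i) (dmap n (yg n v i)))
       + (tens (dmap n (y0 n v i) - dmap n (yg n v i)) (yg n v i) - tens (y0 n v i - yg n v i) (dmap n (yg n v i)))
       + (tens (dmap n (za n v i)) (yg n v i) - tens (za n v i) (dmap n (yg n v i))))
    + ((tens (dmap n (SS n v i)) (za n v i) - tens (SS n v i) (dmap n (za n v i)))
       + (tens (dmap n (y0 n v i)) (za n v i) - tens (y0 n v i) (dmap n (za n v i))))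
    - (tens (dmap n (SS n v (Suc i))) (zQ n v i) - tens (SS n v (Suc i)) (dmap n (zQ n v i)))"
    unfolding GG_def using P S1 S2
    by (simp add: dPP_add dPP_diff dPP_tens1 dmap_diff Pmod_fin)
  have DDT: "DD n (TT n v i) = DD n (y0 n v i) - DD n (yg n v i) + DD n (za n v i) - DD n (zQ n v i)"
    unfolding TT_def by (simp add: DD_add' DD_diff)
  have SS2: "SS n v (Suc i) = SS n v i + TT n v i" using i1 by (rule SS_Suc)
  show ?thesis
    unfolding dPPG DDT dS1 dS2
    unfolding dmap_y0[OF v i1 i2] dmap_yg[OF v i1 i2] dmap_za[OF v i1 i2] dmap_zQ[OF v i1 i2]
      DD_y0[OF v i1 i2] DD_yg[OF v i1 i2] DD_za[OF v i1 i2] DD_zQ[OF v i1 i2] SS2 TT_def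
    by (simp only: tens_lin) (simp add: algebra_simps)
qed

lemma x0_rel: "v \<in> words n \<Longrightarrow> x0 n v (Suc n) = x0 n v 1"
  using cls_rel[of v n "[]"] by (simp add: x0_def ev_def)

lemma HH_step:
  assumes v: "v \<in> words n" and n1: "1 \<le> n"
  shows "dPP n (HH n v) + tens (SS n v (Suc n)) (xb n v n) + tens (x0 n v 1) (TT n v n) - DD n (TT n v n)
       - tens (SS n v n) (x0 n v n) = 0"
proof -
  have i1: "1 \<le> n" and i2: "n \<le> n" using n1 by auto
  note P = atoms_Pmod[OF v i1 i2]
  have S1: "SS n v n \<in> Pmod n 1" using v by (intro SS_Pmod) auto
  have dS1: "dmap n (SS n v n) = x0 n v n - x0 n v 1" using v i1 by (intro dmap_SS) auto
  have dPPH: "dPP n (HH n v) =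
      (tens (dmap n (SS n v n)) (y0 n v n) - tens (SS n v n) (dmap n (y0 n v n)))
    + ((tens (dmap n (SS n v n)) (za n v n) - tens (SS n v n) (dmap n (za n v n)))
       + (tens (dmap n (y0 n v n)) (za n v n) - tens (y0 n v n) (dmap n (za n v n))))
    - (tens (dmap n (zQ n v n)) (yg n v n) - tens (zQ n v n) (dmap n (yg n v n)))"
    unfolding HH_def using P S1
    by (simp add: dPP_add dPP_diff dPP_tens1 Pmod_fin)
  have DDT: "DD n (TT n v n) = DD n (y0 n v n) - DD n (yg n v n) + DD n (za n v n) - DD n (zQ n v n)"
    unfolding TT_def by (simp add: DD_add' DD_diff)
  have SS2: "SS n v (Suc n) = SS n v n + TT n v n" using i1 by (rule SS_Suc)
  show ?thesis
    unfolding dPPH DDT dS1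
    unfolding dmap_y0[OF v i1 i2] dmap_yg[OF v i1 i2] dmap_za[OF v i1 i2] dmap_zQ[OF v i1 i2]
      DD_y0[OF v i1 i2] DD_yg[OF v i1 i2] DD_za[OF v i1 i2] DD_zQ[OF v i1 i2] SS2 TT_def x0_rel[OF v]
    by (simp only: tens_lin) (simp add: algebra_simps)
qed


lemma Aterm_fin[simp]: "finite (supp (Aterm n j))" by (simp add: Aterm_def)
lemma Bterm_fin[simp]: "finite (supp (Bterm n j))" by (simp add: Bterm_def)

context
  fixes n :: nat and v :: word
  assumes v: "v \<in> words n" and n1: "1 \<le> n"
begin

lemma act_y0': "Suc 0 \<le> i \<Longrightarrow> i \<le> n \<Longrightarrow> act n (cls n v) (ev n (pw (i - Suc 0)) (Y i)) = y0 n v i"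
  using v by (simp add: act_ev y0_def)
lemma act_yg': "Suc 0 \<le> i \<Longrightarrow> i \<le> n \<Longrightarrow> act n (cls n v) (ev n (pw (i - Suc 0) @ [la i, lb i, lai i]) (Y i)) = yg n v i"
  using v by (simp add: act_ev yg_def)
lemma act_za': "Suc 0 \<le> i \<Longrightarrow> i \<le> n \<Longrightarrow> act n (cls n v) (ev n (pw (i - Suc 0) @ [la i]) (Z i)) = za n v i"
  using v by (simp add: act_ev za_def)
lemma act_zQ': "i \<le> n \<Longrightarrow> act n (cls n v) (ev n (pw i) (Z i)) = zQ n v i"
  using v by (simp add: act_ev zQ_def)
lemma act_A: "Suc 0 \<le> j \<Longrightarrow> j \<le> n \<Longrightarrow> act n (cls n v) (Aterm n j) = y0 n v j - yg n v j"
  using v by (simp add: Aterm_def act_diff act_ev y0_def yg_def)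
lemma act_B: "Suc 0 \<le> j \<Longrightarrow> j \<le> n \<Longrightarrow> act n (cls n v) (Bterm n j) = za n v j - zQ n v j"
  using v pw_minus[of j] by (simp add: Bterm_def act_diff act_ev za_def zQ_def)

lemma act_last1: "act n (cls n v) (ev n [] (Z n)) = zQ n v n"
  using v cls_rel[of v n "[]"] by (simp add: act_ev) (simp add: zQ_def ev_def)

lemma act_last2: "act n (cls n v) (ev n [lb n] (Y n)) = yg n v n"
proof -
  have w: "la n \<in> letters n" "lb n \<in> letters n" "lai n \<in> letters n" "lbi n \<in> letters n" "pw (n - 1) \<in> words n"
    using n1 by simp_all
  have "cls n (v @ pw (n - 1) @ [la n, lb n, lai n]) = cls n (v @ pw (n - 1) @ [la n, lb n, lai n, lbi n, lb n])"
    using cls_free[of "v @ pw (n - 1) @ [la n, lb n, lai n]" n "[]" "lbi n"] v w by simp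
  also have "\<dots> = cls n (v @ pw n @ [lb n])" using pw_minus[OF n1] by simp
  also have "\<dots> = cls n (v @ [lb n])" using cls_rel[of v n "[lb n]"] v w by simp
  finally have e: "cls n (v @ pw (n - 1) @ [la n, lb n, lai n]) = cls n (v @ [lb n])" .
  have "[lb n] \<in> words n" using w by simp
  then show ?thesis using v e by (simp add: act_ev) (simp add: yg_def ev_def)
qed

definition "Dp = (\<Sum>i=1..n. \<Sum>j\<in>{1..<i}. tens (y0 n v j - yg n v j) (y0 n v i) + tens (za n v j - zQ n v j) (y0 n v i))
 - (\<Sum>i\<in>{1..<n}. (\<Sum>j\<in>{1..<i}. tens (y0 n v j - yg n v j) (yg n v i) + tens (za n v j - zQ n v j) (yg n v i))
      + tens (y0 n v i - yg n v i) (yg n v i) + tens (za n v i) (yg n v i))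
 + (\<Sum>i=1..n. (\<Sum>j\<in>{1..<i}. tens (y0 n v j - yg n v j) (za n v i) + tens (za n v j - zQ n v j) (za n v i))
      + tens (y0 n v i) (za n v i))
 - (\<Sum>i\<in>{1..<n}. \<Sum>j=1..i. tens (y0 n v j - yg n v j) (zQ n v i) + tens (za n v j - zQ n v j) (zQ n v i))
 - tens (zQ n v n) (yg n v n)"

lemma act2_Delta: "act2 n (cls n v) (Delta11 n) = Dp"
  unfolding Delta11_def Dp_def
  by (simp add: act2_add act2_diff act2_sum act2_tens act_diff act_y0' act_yg' act_za' act_zQ' act_A act_B
      act_last1 act_last2)

lemma inner1: "(\<Sum>j\<in>{1..<i}. tens (y0 n v j - yg n v j) y + tens (za n v j - zQ n v j) y) = tens (SS n v i) y"
proof -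
  have "(\<Sum>j\<in>{1..<i}. tens (y0 n v j - yg n v j) y + tens (za n v j - zQ n v j) y) = (\<Sum>j\<in>{1..<i}. tens (TT n v j) y)"
    by (rule sum.cong) (simp_all add: TT_def tens_lin algebra_simps)
  then show ?thesis by (simp add: SS_def tens_sum_left)
qed

lemma inner2: "(\<Sum>j=1..i. tens (y0 n v j - yg n v j) y + tens (za n v j - zQ n v j) y) = tens (SS n v (Suc i)) y"
  using inner1[where i="Suc i" and y=y] by (simp add: atLeastLessThanSuc_atLeastAtMost)

lemma Dp_GG: "Dp = (\<Sum>i\<in>{1..<n}. GG n v i) + HH n v"
proof -
  have r: "(\<Sum>i=1..n. a i) - (\<Sum>i\<in>{1..<n}. b i) + (\<Sum>i=1..n. c i) - (\<Sum>i\<in>{1..<n}. d i) - e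
      = (\<Sum>i\<in>{1..<n}. a i - b i + c i - d i) + (a n + c n - e)" for a b c d :: "nat \<Rightarrow> cell \<times> cell \<Rightarrow> int" and e
  proof -
    have s: "{1..n} = insert n {1..<n}" using n1 by auto
    show ?thesis unfolding s by (simp add: sum.distrib sum_subtractf algebra_simps)
  qed
  show ?thesis
    unfolding Dp_def inner1 inner2 GG_def HH_def by (rule r)
qed

end


lemma tele: "1 \<le> n \<Longrightarrow> (\<Sum>i\<in>{1..<n}. (F i :: 'a :: ab_group_add) - F (Suc i)) = F 1 - F n"
proof -
  assume n: "1 \<le> n"
  have "(\<Sum>i\<in>{1..<n}. F i - F (Suc i)) = - (\<Sum>i\<in>{1..<n}. F (Suc i) - F i)"
    by (simp add: sum_negf[symmetric])
  also have "\<dots> = - (F n - F 1)" using sum_Suc_diff'[OF n, of F] by simp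
  finally show ?thesis by simp
qed

lemma sumlist_zero: "(\<And>u k. (u, k) \<in> set ts \<Longrightarrow> c \<noteq> h u) \<Longrightarrow> (\<Sum>(u, k)\<leftarrow>ts. if c = h u then k else (0::int)) = 0"
proof (induction ts)
  case Nil then show ?case by simp
next
  case (Cons p ts)
  obtain a b where p: "p = (a, b)" by (cases p)
  have "c \<noteq> h a" using Cons.prems[of a b] p by simp
  moreover have "(\<Sum>(u, k)\<leftarrow>ts. if c = h u then k else (0::int)) = 0"
  proof (rule Cons.IH)
    fix u k assume "(u, k) \<in> set ts" then show "c \<noteq> h u" using Cons.prems[of u k] by simp
  qed
  ultimately show ?case using p by simp
qed

lemma fcomb_fin[simp]: "finite (supp (fcomb n g ts e))"
proof -
  have "supp (fcomb n g ts e) \<subseteq> set (map (\<lambda>(u, k). (gmul n g (cls n u), e)) ts)"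
  proof
    fix c assume c: "c \<in> supp (fcomb n g ts e)"
    show "c \<in> set (map (\<lambda>(u, k). (gmul n g (cls n u), e)) ts)"
    proof (rule ccontr)
      assume "c \<notin> set (map (\<lambda>(u, k). (gmul n g (cls n u), e)) ts)"
      then have "\<And>u k. (u, k) \<in> set ts \<Longrightarrow> c \<noteq> (gmul n g (cls n u), e)" by force
      then have "fcomb n g ts e c = 0" unfolding fcomb_def by (rule sumlist_zero)
      then show False using c by (simp add: supp_def)
    qed
  qed
  then show ?thesis by (rule finite_subset) simp
qed

lemma dP_fin[simp]: "finite (supp (dP n c))"
proof -
  obtain g e where c: "c = (g, e)" by (cases c)
  show ?thesis unfolding c by (cases e) (simp_all add: fin_sum)
qed

lemma GG_fin[simp]: "finite (supp (GG n v i))" by (simp add: GG_def)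
lemma HH_fin[simp]: "finite (supp (HH n v))" by (simp add: HH_def)

context
  fixes n :: nat and v :: word
  assumes v: "v \<in> words n" and n1: "1 \<le> n"
begin

lemma dP_W: "dP n (cls n v, W) = SS n v (Suc n)"
proof -
  have "dP n (cls n v, W) = (\<Sum>i\<in>{1..n}. TT n v i)"
    unfolding dP.simps
  proof (rule sum.cong[OF refl])
    fix i assume "i \<in> {1..n}"
    then have i: "1 \<le> i" "i \<le> n" by auto
    have w: "pw (i - 1) \<in> words n" "pw (i - 1) @ [la i] \<in> words n"
      "pw (i - 1) @ [la i, lb i, lai i] \<in> words n" "pw (i - 1) @ [la i, lb i, lai i, lbi i] \<in> words n"
      using i by simp_all
    show "fcomb n (cls n v) (fox (i, False) (pw n)) (Y i) + fcomb n (cls n v) (fox (i, True) (pw n)) (Z i) = TT n v i"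
      unfolding fox_pw_a[OF i] fox_pw_b[OF i] fcomb2[OF v w(1) w(3)] fcomb2[OF v w(2) w(4)]
      using pw_minus[OF i(1)] by (simp add: TT_def atom_defs algebra_simps)
  qed
  also have "\<dots> = SS n v (Suc n)" by (simp add: SS_def atLeastLessThanSuc_atLeastAtMost)
  finally show ?thesis .
qed

lemma Phi_W: "Phi n (cls n v, W) = tens (ev n v W) (xb n v n) + tens (x0 n v 1) (ev n v W) + ((\<Sum>i\<in>{1..<n}. GG n v i) + HH n v)"
proof -
  have w: "pw (n - 1) @ [la n, lb n] \<in> words n" using n1 by simp
  have "Phi n (cls n v, W) = tens (ev n v W) (ev n (v @ pw (n - 1) @ [la n, lb n]) X) + tens (ev n v X) (ev n v W) + act2 n (cls n v) (Delta11 n)"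
    using v w Delta11_PP2[OF n1] by (simp add: Phi_def act2_add act2_tens act_ev PP2_def)
  then show ?thesis using act2_Delta[OF v n1] Dp_GG[OF v n1] by (simp add: xb_def x0_def)
qed

lemma chain_W: "dPP n (Phi n (cls n v, W)) = DD n (dP n (cls n v, W))"
proof -
  have evW: "ev n v W \<in> Pmod n 2" using v by simp
  have evX: "x0 n v 1 \<in> Pmod n 0" using v by (simp add: x0_def)
  have dW: "dmap n (ev n v W) = SS n v (Suc n)" by (simp only: dmap_def ev_def lext_bv dP_W)
  define A where "A = (\<Sum>i\<in>{1..<n}. tens (x0 n v 1) (TT n v i))"
  define B where "B = (\<Sum>i\<in>{1..<n}. DD n (TT n v i))"
  have 1: "dPP n (Phi n (cls n v, W)) = tens (SS n v (Suc n)) (xb n v n) + tens (x0 n v 1) (SS n v (Suc n))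
       + (\<Sum>i\<in>{1..<n}. dPP n (GG n v i)) + dPP n (HH n v)"
    unfolding Phi_W using evW evX
    by (simp add: dPP_add dPP_sum dPP_tens2 dPP_tens0 dW)
  have g: "dPP n (GG n v i) = (tens (SS n v i) (x0 n v i) - tens (SS n v (Suc i)) (x0 n v (Suc i)))
      - tens (x0 n v 1) (TT n v i) + DD n (TT n v i)" if "i \<in> {1..<n}" for i
  proof -
    have i: "1 \<le> i" "i \<le> n" using that by auto
    show ?thesis using GG_step[OF v i] by (simp add: algebra_simps)
  qed
  have 2: "(\<Sum>i\<in>{1..<n}. dPP n (GG n v i)) = - tens (SS n v n) (x0 n v n) - A + B"
  proof -
    have "(\<Sum>i\<in>{1..<n}. dPP n (GG n v i)) = (\<Sum>i\<in>{1..<n}. (tens (SS n v i) (x0 n v i) - tens (SS n v (Suc i)) (x0 n v (Suc i))))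
      - A + B"
      unfolding A_def B_def by (simp add: g sum.distrib sum_subtractf)
    also have "(\<Sum>i\<in>{1..<n}. (tens (SS n v i) (x0 n v i) - tens (SS n v (Suc i)) (x0 n v (Suc i))))
       = tens (SS n v 1) (x0 n v 1) - tens (SS n v n) (x0 n v n)"
      using tele[OF n1, of "\<lambda>i. tens (SS n v i) (x0 n v i)"] by simp
    finally show ?thesis by (simp add: fun_eq_iff)
  qed
  have s: "{1..n} = insert n {1..<n}" using n1 by auto
  have 3: "tens (x0 n v 1) (SS n v (Suc n)) = A + tens (x0 n v 1) (TT n v n)"
    unfolding A_def SS_def tens_sum_right atLeastLessThanSuc_atLeastAtMost s by (simp add: add.commute)
  have 4: "DD n (dP n (cls n v, W)) = B + DD n (TT n v n)"
    unfolding B_def dP_W SS_def atLeastLessThanSuc_atLeastAtMost s by (simp add: DD_sum DD_add' add.commute)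
  have 5: "dPP n (HH n v) = tens (SS n v n) (x0 n v n) - tens (SS n v (Suc n)) (xb n v n)
       - tens (x0 n v 1) (TT n v n) + DD n (TT n v n)"
    using HH_step[OF v n1] by (simp add: algebra_simps)
  show ?thesis unfolding 1 2 3 4 5 by (simp add: algebra_simps)
qed

end

lemma chain_YZ:
  assumes v: "v \<in> words n" and i: "1 \<le> i" "i \<le> n"
  shows "dPP n (Phi n (cls n v, Y i)) = DD n (dP n (cls n v, Y i))"
    and "dPP n (Phi n (cls n v, Z i)) = DD n (dP n (cls n v, Z i))"
proof -
  have w: "[la i] \<in> words n" "[lb i] \<in> words n" using i by simp_all
  have hY: "Phi n (cls n v, Y i) = tens (ev n v (Y i)) (ev n (v @ [la i]) X) + tens (ev n v X) (ev n v (Y i))"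
    using v w by (simp add: Phi_def act2_add act2_tens act_ev)
  have hZ: "Phi n (cls n v, Z i) = tens (ev n v (Z i)) (ev n (v @ [lb i]) X) + tens (ev n v X) (ev n v (Z i))"
    using v w by (simp add: Phi_def act2_add act2_tens act_ev)
  have PX: "DD n (ev n u X) = tens (ev n u X) (ev n u X)" if "u \<in> words n" for u
    using that by (simp only: DD_ev) (simp add: Phi_X tens_bv ev_def)
  have Y1: "ev n v (Y i) \<in> Pmod n 1" "ev n v (Z i) \<in> Pmod n 1" using v i by simp_all
  have X0: "ev n v X \<in> Pmod n 0" using v by simp
  have dY: "dmap n (ev n v (Y i)) = ev n (v @ [la i]) X - ev n v X" by (rule dmapY[OF v i v])
  have dZ: "dmap n (ev n v (Z i)) = ev n (v @ [lb i]) X - ev n v X" by (rule dmapZ[OF v i v])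
  have pY: "dP n (cls n v, Y i) = ev n (v @ [la i]) X - ev n v X" using v w by (simp add: gmul_cls ev_def)
  have pZ: "dP n (cls n v, Z i) = ev n (v @ [lb i]) X - ev n v X" using v w by (simp add: gmul_cls ev_def)
  show "dPP n (Phi n (cls n v, Y i)) = DD n (dP n (cls n v, Y i))"
    unfolding hY pY using Y1 X0 v w
    by (simp add: dPP_add dPP_tens1 dPP_tens0 dY dmap_X DD_diff PX tens_lin)
  show "dPP n (Phi n (cls n v, Z i)) = DD n (dP n (cls n v, Z i))"
    unfolding hZ pZ using Y1 X0 v w
    by (simp add: dPP_add dPP_tens1 dPP_tens0 dZ dmap_X DD_diff PX tens_lin)
qed


lemma chain_cell: "1 \<le> n \<Longrightarrow> c \<in> cells n r \<Longrightarrow> 1 \<le> r \<Longrightarrow> dPP n (Phi n c) = DD n (dP n c)"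
proof -
  assume n: "1 \<le> n" and c: "c \<in> cells n r" and r: "1 \<le> r"
  obtain g e where ge: "c = (g, e)" by (cases c)
  have g: "g \<in> Gcar n" and ve: "valid_gen n e" and de: "deg e = r" using c ge by (simp_all add: cells_iff)
  obtain v where v: "v \<in> words n" and gv: "g = cls n v" using g by (rule GcarE)
  show ?thesis
  proof (cases e)
    case X then show ?thesis using de r by simp
  next
    case (Y i) then show ?thesis using ve ge gv chain_YZ(1)[OF v] by simp
  next
    case (Z i) then show ?thesis using ve ge gv chain_YZ(2)[OF v] by simp
  next
    case W then show ?thesis using ge gv chain_W[OF v n] by simp
  qed
qed

lemma chain_f: "1 \<le> n \<Longrightarrow> f \<in> Pmod n r \<Longrightarrow> 1 \<le> r \<Longrightarrow> dPP n (DD n f) = DD n (dmap n f)"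
proof -
  assume n: "1 \<le> n" and f: "f \<in> Pmod n r" and r: "1 \<le> r"
  have ff: "finite (supp f)" using f by (simp add: Pmod_iff)
  have cc: "c \<in> cells n r" if "c \<in> supp f" for c using f that unfolding Pmod_iff by blast
  have "dPP n (DD n f) = lext f (\<lambda>c. lext (Phi n c) (psi n))"
    unfolding dPP_alt DD_def
    by (rule lext_lext[OF ff]) (rule PPmod_fin[OF Phi_PPmod[OF n cc]])
  also have "\<dots> = lext f (\<lambda>c. lext (dP n c) (Phi n))"
  proof (rule lext_cong)
    fix c assume "c \<in> supp f"
    then show "lext (Phi n c) (psi n) = lext (dP n c) (Phi n)"
      using chain_cell[OF n cc r] by (simp add: dPP_alt DD_def)
  qed
  also have "\<dots> = DD n (dmap n f)"
    unfolding DD_def dmap_def by (rule lext_lext[OF ff, symmetric]) simp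
  finally show ?thesis .
qed

lemma DD_ev0: "1 \<le> n \<Longrightarrow> valid_gen n e \<Longrightarrow> DD n (ev n [] e) = Bv n e"
proof -
  assume n: "1 \<le> n" and e: "valid_gen n e"
  have B: "Bv n e \<in> PPmod n (deg e)" by (rule Bv_PPmod[OF n e])
  show ?thesis by (simp add: DD_ev Phi_def act2_one[OF PPmod_fin[OF B] PPmod_Gcells[OF B]])
qed

lemma proj_add: "proj r s (F + G) = proj r s F + proj r s G"
  by (rule ext) (auto simp: proj_def split: prod.splits)

lemma proj_same: "F \<in> PP2 n r s \<Longrightarrow> proj r s F = F"
proof (rule ext)
  fix x :: "cell \<times> cell" assume F: "F \<in> PP2 n r s"
  obtain c c' where x: "x = (c, c')" by (cases x)
  show "proj r s F x = F x"
  proof (cases "F (c, c') = 0")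
    case False
    then have "(c, c') \<in> supp F" by (simp add: supp_def)
    then have "c \<in> cells n r" "c' \<in> cells n s" using F unfolding PP2_def by blast+
    then show ?thesis using x by (simp add: proj_def cells_iff)
  qed (simp add: x proj_def)
qed

lemma proj_other: "F \<in> PP2 n r' s' \<Longrightarrow> r' \<noteq> r \<or> s' \<noteq> s \<Longrightarrow> proj r s F = 0"
proof (rule ext)
  fix x :: "cell \<times> cell" assume F: "F \<in> PP2 n r' s'" and d: "r' \<noteq> r \<or> s' \<noteq> s"
  obtain c c' where x: "x = (c, c')" by (cases x)
  show "proj r s F x = 0 x"
  proof (cases "F (c, c') = 0")
    case False
    then have "(c, c') \<in> supp F" by (simp add: supp_def)
    then have "c \<in> cells n r'" "c' \<in> cells n s'" using F unfolding PP2_def by blast+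
    then show ?thesis using x d by (auto simp: proj_def cells_iff)
  qed (simp add: x proj_def)
qed

theorem mainTheorem2:
  fixes n :: nat
  assumes "n \<ge> 1"
  shows "\<exists>D0 D1 D2. diag_approx n D0 D1 D2 \<and>
     D0 (ev n [] X) = tens (ev n [] X) (ev n [] X) \<and>
     (\<forall>i\<in>{1..n}. D1 (ev n [] (Y i)) = tens (ev n [] (Y i)) (ev n [la i] X) + tens (ev n [] X) (ev n [] (Y i))) \<and>
     (\<forall>i\<in>{1..n}. D1 (ev n [] (Z i)) = tens (ev n [] (Z i)) (ev n [lb i] X) + tens (ev n [] X) (ev n [] (Z i))) \<and>
     proj 0 2 (D2 (ev n [] W)) = tens (ev n [] X) (ev n [] W) \<and>
     proj 1 1 (D2 (ev n [] W)) = Delta11 n"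
proof -
  have n: "1 \<le> n" using assms by simp
  have da: "diag_approx n (DD n) (DD n) (DD n)"
    unfolding diag_approx_def
    using ZG_linear_DD[OF n] chain_f[OF n] DD_eps by auto
  have v0: "DD n (ev n [] X) = tens (ev n [] X) (ev n [] X)" using DD_ev0[OF n, of X] by simp
  have vY: "\<forall>i\<in>{1..n}. DD n (ev n [] (Y i)) = tens (ev n [] (Y i)) (ev n [la i] X) + tens (ev n [] X) (ev n [] (Y i))"
    using DD_ev0[OF n] by simp
  have vZ: "\<forall>i\<in>{1..n}. DD n (ev n [] (Z i)) = tens (ev n [] (Z i)) (ev n [lb i] X) + tens (ev n [] X) (ev n [] (Z i))"
    using DD_ev0[OF n] by simp
  have wq: "pw (n - 1) @ [la n, lb n] \<in> words n" using n by simp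
  have T1: "tens (ev n [] W) (ev n (pw (n - 1) @ [la n, lb n]) X) \<in> PP2 n 2 0"
    by (rule tens_PP2, simp, rule ev_Pmod[OF wq], simp_all)
  have T2: "tens (ev n [] X) (ev n [] W) \<in> PP2 n 0 2"
    by (rule tens_PP2) simp_all
  have T3: "Delta11 n \<in> PP2 n 1 1" by (rule Delta11_PP2[OF n])
  have vW: "DD n (ev n [] W) = tens (ev n [] W) (ev n (pw (n - 1) @ [la n, lb n]) X) + tens (ev n [] X) (ev n [] W) + Delta11 n"
    using DD_ev0[OF n, of W] by simp
  have z1: "proj 0 2 (tens (ev n [] W) (ev n (pw (n - 1) @ [la n, lb n]) X)) = 0" by (rule proj_other[OF T1]) simp
  have z2: "proj 0 2 (Delta11 n) = 0" by (rule proj_other[OF T3]) simp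
  have z3: "proj 1 1 (tens (ev n [] W) (ev n (pw (n - 1) @ [la n, lb n]) X)) = 0" by (rule proj_other[OF T1]) simp
  have z4: "proj 1 1 (tens (ev n [] X) (ev n [] W)) = 0" by (rule proj_other[OF T2]) simp
  have p02: "proj 0 2 (DD n (ev n [] W)) = tens (ev n [] X) (ev n [] W)"
    unfolding vW proj_add z1 z2 proj_same[OF T2] by simp
  have p11: "proj 1 1 (DD n (ev n [] W)) = Delta11 n"
    unfolding vW proj_add z3 z4 proj_same[OF T3] by simp
  show ?thesis
    by (rule exI[of _ "DD n"], rule exI[of _ "DD n"], rule exI[of _ "DD n"]) (use da v0 vY vZ p02 p11 in blast)
qed


end
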